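(* For any $1\leq j\leq i<n$ and $r\in\mathbb{Z}$: $$E^{(r)}_{j,i+1}=(-1)^{\delta_{r<0}}v^{-jr}\,\Upsilon^{-1}(\tilde e^{(r)}_{j,i+1}),\qquad F^{(r)}_{i+1,j}=(-1)^{\delta_{r>0}}v^{-jr}\,\Upsilon^{-1}(\tilde f^{(r)}_{i+1,j}),$$ where $\delta_{r<0}$ (resp. $\delta_{r>0}$) equals $1$ if $r<0$ (resp. $r>0$) and $0$ otherwise.
   Context: Let $v$ be a formal variable, $(c_{ii'})$ the Cartan matrix of $\mathfrak{sl}_n$, $[a,b]_x=ab-x\,ba$, $\delta(z)=\sum_{r\in\mathbb{Z}}z^r$. $U_v(L\mathfrak{gl}_n)$ is the $\mathbb{C}(v)$-algebra generated by $\{e_{i,r},f_{i,r}\}_{1\leq i<n}^{r\in\mathbb{Z}}\cup\{\varphi^+_{j,s},\varphi^-_{j,-s}\}_{1\leq j\leq n}^{s\in\mathbb{N}}$, with $e_i(z)=\sum_re_{i,r}z^{-r}$, $f_i(z)=\sum_rf_{i,r}z^{-r}$, $\varphi^\pm_j(z)=\sum_{s\geq0}\varphi^\pm_{j,\pm s}z^{\mp s}$, $\psi^\pm_i(z)=(\varphi^\pm_i(z))^{-1}\varphi^\pm_{i+1}(v^{-1}z)$, and relations: $[\varphi^\epsilon_j(z),\varphi^{\epsilon'}_{j'}(w)]=0$, $\varphi^\pm_{j,0}\varphi^\mp_{j,0}=1$; $(z-v^{c_{ii'}}w)e_i(z)e_{i'}(w)=(v^{c_{ii'}}z-w)e_{i'}(w)e_i(z)$;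 $(v^{c_{ii'}}z-w)f_i(z)f_{i'}(w)=(z-v^{c_{ii'}}w)f_{i'}(w)f_i(z)$; $(vz-v^{-1}w)^{\delta_{ji}}(z-vw)^{\delta_{j,i+1}}\varphi^\epsilon_j(z)e_i(w)=(z-w)^{\delta_{ji}}(vz-w)^{\delta_{j,i+1}}e_i(w)\varphi^\epsilon_j(z)$; $(z-w)^{\delta_{ji}}(vz-w)^{\delta_{j,i+1}}\varphi^\epsilon_j(z)f_i(w)=(vz-v^{-1}w)^{\delta_{ji}}(z-vw)^{\delta_{j,i+1}}f_i(w)\varphi^\epsilon_j(z)$; $[e_i(z),f_{i'}(w)]=\frac{\delta_{ii'}}{v-v^{-1}}\delta(z/w)(\psi^+_i(z)-\psi^-_i(z))$; $e_i,e_{i'}$ (and $f_i,f_{i'}$) commute if $c_{ii'}=0$; $[e_i(z_1),[e_i(z_2),e_{i'}(w)]_{v^{-1}}]_v+(z_1\leftrightarrow z_2)=0$ and likewise for $f$ if $c_{ii'}=-1$. Half-currents $e^+_i(z)=\sum_{r\geq0}e_{i,r}z^{-r}$, $e^-_i(z)=-\sum_{r<0}e_{i,r}z^{-r}$, $f^+_i(z)=\sum_{r>0}f_{i,r}z^{-r}$, $f^-_i(z)=-\sum_{r\leq0}f_{i,r}z^{-r}$. $E^{(r)}_{j,i+1}=(v-v^{-1})[e_{i,0},\cdots,[e_{j+1,0},e_{j,r}]_{v^{-1}}\cdots]_{v^{-1}}$, $F^{(r)}_{i+1,j}=(v^{-1}-v)[\cdots[f_{j,r},f_{j+1,0}]_v,\cdots,f_{i,0}]_v$.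 $R_{\mathrm{trig}}(z,w)=(vz-v^{-1}w)\sum_iE_{ii}\otimes E_{ii}+(z-w)\sum_{i\neq j}E_{ii}\otimes E_{jj}+(v-v^{-1})z\sum_{i<j}E_{ij}\otimes E_{ji}+(v-v^{-1})w\sum_{i>j}E_{ij}\otimes E_{ji}$; $U^{\mathrm{rtt}}_v(L\mathfrak{gl}_n)$ is the $\mathbb{C}(v)$-algebra generated by $\{t^\pm_{ij}[\pm r]\}^{r\in\mathbb{N}}$ with relations $t^\pm_{ii}[0]t^\mp_{ii}[0]=1$, $t^+_{ij}[0]=t^-_{ji}[0]=0$ ($j<i$), $R_{\mathrm{trig}}(z,w)T^\epsilon_1(z)T^{\epsilon'}_2(w)=T^{\epsilon'}_2(w)T^\epsilon_1(z)R_{\mathrm{trig}}(z,w)$ for $(\epsilon,\epsilon')\in\{(+,+),(-,-),(-,+)\}$, $T^\pm(z)=\sum t^\pm_{ij}(z)\otimes E_{ij}$, $t^\pm_{ij}(z)=\sum_{r\geq0}t^\pm_{ij}[\pm r]z^{\mp r}$. Gauss decomposition $T^\pm(z)=\tilde F^\pm(z)\tilde G^\pm(z)\tilde E^\pm(z)$ ($\tilde F^\pm$ lower unitriangular with entries $\tilde f^\pm_{ij}(z)$, $\tilde G^\pm=\operatorname{diag}(\tilde g^\pm_i(z))$, $\tilde E^\pm$ upper unitriangular with entries $\tilde e^\pm_{ij}(z)$), with modes $\tilde e^+_{ij}(z)=\sum_{r\geq0}\tilde e^{(r)}_{ij}z^{-r}$, $\tilde e^-_{ij}(z)=\sum_{r<0}\tilde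 e^{(r)}_{ij}z^{-r}$, $\tilde f^+_{ij}(z)=\sum_{r>0}\tilde f^{(r)}_{ij}z^{-r}$, $\tilde f^-_{ij}(z)=\sum_{r\leq0}\tilde f^{(r)}_{ij}z^{-r}$. $\Upsilon\colon U_v(L\mathfrak{gl}_n)\xrightarrow{\sim}U^{\mathrm{rtt}}_v(L\mathfrak{gl}_n)$ is the $\mathbb{C}(v)$-algebra isomorphism given by $e^\pm_i(z)\mapsto\frac{\tilde e^\pm_{i,i+1}(v^iz)}{v-v^{-1}}$, $f^\pm_i(z)\mapsto\frac{\tilde f^\pm_{i+1,i}(v^iz)}{v-v^{-1}}$, $\varphi^\pm_j(z)\mapsto\tilde g^\pm_j(v^jz)$. *)

theory Defs
  imports Complex_Main "HOL-Computational_Algebra.Polynomial" "HOL-Computational_Algebra.Fraction_Field"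
begin

type_synonym cv = "complex poly fract"

definition vv :: cv where "vv = Fract [:0, 1:] 1"

definition cv_algebra :: "(cv \<Rightarrow> 'b::ring_1) \<Rightarrow> bool" where
  "cv_algebra \<iota> \<longleftrightarrow> \<iota> 1 = 1 \<and> (\<forall>x y. \<iota> (x + y) = \<iota> x + \<iota> y) \<and>
     (\<forall>x y. \<iota> (x * y) = \<iota> x * \<iota> y) \<and> (\<forall>x y. \<iota> x * y = y * \<iota> x)"

definition qbr :: "(cv \<Rightarrow> 'b::ring_1) \<Rightarrow> cv \<Rightarrow> 'b \<Rightarrow> 'b \<Rightarrow> 'b" where
  "qbr \<iota> x a b = a * b - \<iota> x * b * a"

definition alg_iso :: "(cv \<Rightarrow> 'a::ring_1) \<Rightarrow> (cv \<Rightarrow> 'b::ring_1) \<Rightarrow> ('a \<Rightarrow> 'b) \<Rightarrow> bool" where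
  "alg_iso \<iota>A \<iota>B \<Phi> \<longleftrightarrow> bij \<Phi> \<and> (\<forall>x y. \<Phi> (x + y) = \<Phi> x + \<Phi> y) \<and>
     (\<forall>x y. \<Phi> (x * y) = \<Phi> x * \<Phi> y) \<and> \<Phi> 1 = 1 \<and> (\<forall>c. \<Phi> (\<iota>A c) = \<iota>B c)"

section \<open>The trigonometric R-matrix, written as R(z,w) = z Rz + w Rw\<close>

text \<open>Entry R_{(a,c),(a',c')}: coefficient of z\<close>
definition Rz :: "nat \<Rightarrow> nat \<Rightarrow> nat \<Rightarrow> nat \<Rightarrow> cv" where
  "Rz a c a' c' =
     (if a' = a \<and> c' = c then (if a = c then vv else 1)
      else if a' = c \<and> c' = a \<and> a < c then vv - inverse vv
      else 0)"

definition Rw :: "nat \<Rightarrow> nat \<Rightarrow> nat \<Rightarrow> nat \<Rightarrow> cv" where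
  "Rw a c a' c' =
     (if a' = a \<and> c' = c then (if a = c then - inverse vv else -1)
      else if a' = c \<and> c' = a \<and> c < a then vv - inverse vv
      else 0)"

section \<open>Series as Laurent coefficient functions (coefficient of z^k)\<close>

text \<open>t^+_{ab}(z) = sum_{r>=0} t^+_{ab}[r] z^{-r}, with tp a b r = t^+_{ab}[r]\<close>
definition Lp :: "(nat \<Rightarrow> nat \<Rightarrow> nat \<Rightarrow> 'b::zero) \<Rightarrow> nat \<Rightarrow> nat \<Rightarrow> int \<Rightarrow> 'b" where
  "Lp x a b k = (if k \<le> 0 then x a b (nat (- k)) else 0)"

text \<open>t^-_{ab}(z) = sum_{r>=0} t^-_{ab}[-r] z^{r}, with tm a b r = t^-_{ab}[-r]\<close>
definition Lm :: "(nat \<Rightarrow> nat \<Rightarrow> nat \<Rightarrow> 'b::zero) \<Rightarrow> nat \<Rightarrow> nat \<Rightarrow> int \<Rightarrow> 'b" where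
  "Lm x a b k = (if 0 \<le> k then x a b (nat k) else 0)"

text \<open>R(z,w) X_1(z) Y_2(w) = Y_2(w) X_1(z) R(z,w), compared coefficientwise at z^p w^q
  and at the matrix entry ((a,c),(b,d)) of End(C^n (x) C^n).\<close>
definition rtt_rel :: "(cv \<Rightarrow> 'b::ring_1) \<Rightarrow> nat \<Rightarrow> (nat \<Rightarrow> nat \<Rightarrow> int \<Rightarrow> 'b)
    \<Rightarrow> (nat \<Rightarrow> nat \<Rightarrow> int \<Rightarrow> 'b) \<Rightarrow> bool" where
  "rtt_rel \<iota> n X Y \<longleftrightarrow>
    (\<forall>a\<in>{1..n}. \<forall>b\<in>{1..n}. \<forall>c\<in>{1..n}. \<forall>d\<in>{1..n}. \<forall>p q :: int.
      (\<Sum>a'\<in>{1..n}. \<Sum>c'\<in>{1..n}.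
          \<iota> (Rz a c a' c') * X a' b (p - 1) * Y c' d q
        + \<iota> (Rw a c a' c') * X a' b p * Y c' d (q - 1))
    = (\<Sum>b'\<in>{1..n}. \<Sum>d'\<in>{1..n}.
          Y c d' q * X a b' (p - 1) * \<iota> (Rz b' d' b d)
        + Y c d' (q - 1) * X a b' p * \<iota> (Rw b' d' b d)))"

definition rtt_model :: "(cv \<Rightarrow> 'b::ring_1) \<Rightarrow> nat \<Rightarrow> (nat \<Rightarrow> nat \<Rightarrow> nat \<Rightarrow> 'b)
    \<Rightarrow> (nat \<Rightarrow> nat \<Rightarrow> nat \<Rightarrow> 'b) \<Rightarrow> bool" where
  "rtt_model \<iota> n tp tm \<longleftrightarrow>
     (\<forall>a\<in>{1..n}. tp a a 0 * tm a a 0 = 1 \<and> tm a a 0 * tp a a 0 = 1) \<and>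
     (\<forall>a\<in>{1..n}. \<forall>b\<in>{1..n}. b < a \<longrightarrow> tp a b 0 = 0 \<and> tm b a 0 = 0) \<and>
     rtt_rel \<iota> n (Lp tp) (Lp tp) \<and>
     rtt_rel \<iota> n (Lm tm) (Lm tm) \<and>
     rtt_rel \<iota> n (Lm tm) (Lp tp)"

section \<open>Gauss decomposition T^\<pm>(z) = F^\<pm>(z) G^\<pm>(z) E^\<pm>(z)\<close>

definition conv3 :: "(nat \<Rightarrow> 'b::ring_1) \<Rightarrow> (nat \<Rightarrow> 'b) \<Rightarrow> (nat \<Rightarrow> 'b) \<Rightarrow> nat \<Rightarrow> 'b" where
  "conv3 F G E s = (\<Sum>p\<le>s. \<Sum>q\<le>s - p. F p * G q * E (s - p - q))"

text \<open>Coefficient of z^{-p} in the (a,k) entry of F^+; ftil a k r = f~^{(r)}_{ak}\<close>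
definition Fpc :: "(nat \<Rightarrow> nat \<Rightarrow> int \<Rightarrow> 'b::ring_1) \<Rightarrow> nat \<Rightarrow> nat \<Rightarrow> nat \<Rightarrow> 'b" where
  "Fpc ftil a k p = (if k = a then (if p = 0 then 1 else 0)
                     else if 0 < p then ftil a k (int p) else 0)"

text \<open>Coefficient of z^{-u} in the (k,b) entry of E^+; etil k b r = e~^{(r)}_{kb}\<close>
definition Epc :: "(nat \<Rightarrow> nat \<Rightarrow> int \<Rightarrow> 'b::ring_1) \<Rightarrow> nat \<Rightarrow> nat \<Rightarrow> nat \<Rightarrow> 'b" where
  "Epc etil k b u = (if k = b then (if u = 0 then 1 else 0) else etil k b (int u))"

text \<open>Coefficient of z^{p} in the (a,k) entry of F^-\<close>
definition Fmc :: "(nat \<Rightarrow> nat \<Rightarrow> int \<Rightarrow> 'b::ring_1) \<Rightarrow> nat \<Rightarrow> nat \<Rightarrow> nat \<Rightarrow> 'b" where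
  "Fmc ftil a k p = (if k = a then (if p = 0 then 1 else 0) else ftil a k (- int p))"

text \<open>Coefficient of z^{u} in the (k,b) entry of E^-\<close>
definition Emc :: "(nat \<Rightarrow> nat \<Rightarrow> int \<Rightarrow> 'b::ring_1) \<Rightarrow> nat \<Rightarrow> nat \<Rightarrow> nat \<Rightarrow> 'b" where
  "Emc etil k b u = (if k = b then (if u = 0 then 1 else 0)
                     else if 0 < u then etil k b (- int u) else 0)"

text \<open>gp k s = coefficient of z^{-s} in g~^+_k(z), gm k s = coefficient of z^{s} in g~^-_k(z)\<close>
definition gauss_decomp :: "nat \<Rightarrow> (nat \<Rightarrow> nat \<Rightarrow> nat \<Rightarrow> 'b::ring_1) \<Rightarrow> (nat \<Rightarrow> nat \<Rightarrow> nat \<Rightarrow> 'b)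
    \<Rightarrow> (nat \<Rightarrow> nat \<Rightarrow> int \<Rightarrow> 'b) \<Rightarrow> (nat \<Rightarrow> nat \<Rightarrow> int \<Rightarrow> 'b)
    \<Rightarrow> (nat \<Rightarrow> nat \<Rightarrow> 'b) \<Rightarrow> (nat \<Rightarrow> nat \<Rightarrow> 'b) \<Rightarrow> bool" where
  "gauss_decomp n tp tm etil ftil gp gm \<longleftrightarrow>
    (\<forall>a\<in>{1..n}. \<forall>b\<in>{1..n}. \<forall>s.
       tp a b s = (\<Sum>k\<in>{1..min a b}. conv3 (Fpc ftil a k) (gp k) (Epc etil k b) s) \<and>
       tm a b s = (\<Sum>k\<in>{1..min a b}. conv3 (Fmc ftil a k) (gm k) (Emc etil k b) s))"

text \<open>e k r = e_{k,r}, f k r = f_{k,r}, php j s = phi^+_{j,s}, phm j s = phi^-_{j,-s}.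
  Coefficients of e^\<pm>_k(z) -> e~^\<pm>_{k,k+1}(v^k z)/(v-v^{-1}) etc.\<close>
definition upsilon_gens :: "(cv \<Rightarrow> 'b::ring_1) \<Rightarrow> nat \<Rightarrow> ('a \<Rightarrow> 'b)
    \<Rightarrow> (nat \<Rightarrow> int \<Rightarrow> 'a) \<Rightarrow> (nat \<Rightarrow> int \<Rightarrow> 'a) \<Rightarrow> (nat \<Rightarrow> nat \<Rightarrow> 'a) \<Rightarrow> (nat \<Rightarrow> nat \<Rightarrow> 'a)
    \<Rightarrow> (nat \<Rightarrow> nat \<Rightarrow> int \<Rightarrow> 'b) \<Rightarrow> (nat \<Rightarrow> nat \<Rightarrow> int \<Rightarrow> 'b)
    \<Rightarrow> (nat \<Rightarrow> nat \<Rightarrow> 'b) \<Rightarrow> (nat \<Rightarrow> nat \<Rightarrow> 'b) \<Rightarrow> bool" where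
  "upsilon_gens \<iota>B n \<Phi> e f php phm etil ftil gp gm \<longleftrightarrow>
    (\<forall>k\<in>{1..<n}. \<forall>r::int.
       \<Phi> (e k r) = \<iota>B ((if r < 0 then -1 else 1) * vv powi (- (int k * r)) / (vv - inverse vv))
                     * etil k (k + 1) r) \<and>
    (\<forall>k\<in>{1..<n}. \<forall>r::int.
       \<Phi> (f k r) = \<iota>B ((if 0 < r then 1 else -1) * vv powi (- (int k * r)) / (vv - inverse vv))
                     * ftil (k + 1) k r) \<and>
    (\<forall>j\<in>{1..n}. \<forall>s::nat.
       \<Phi> (php j s) = \<iota>B (vv powi (- (int j * int s))) * gp j s \<and>
       \<Phi> (phm j s) = \<iota>B (vv powi (int j * int s)) * gm j s)"

section \<open>The elements E^{(r)}_{j,i+1} and F^{(r)}_{i+1,j} (nested part, depth k = i - j)\<close>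

fun nestE :: "(cv \<Rightarrow> 'a::ring_1) \<Rightarrow> (nat \<Rightarrow> int \<Rightarrow> 'a) \<Rightarrow> nat \<Rightarrow> int \<Rightarrow> nat \<Rightarrow> 'a" where
  "nestE \<iota> e j r 0 = e j r"
| "nestE \<iota> e j r (Suc k) = qbr \<iota> (inverse vv) (e (j + Suc k) 0) (nestE \<iota> e j r k)"

fun nestF :: "(cv \<Rightarrow> 'a::ring_1) \<Rightarrow> (nat \<Rightarrow> int \<Rightarrow> 'a) \<Rightarrow> nat \<Rightarrow> int \<Rightarrow> nat \<Rightarrow> 'a" where
  "nestF \<iota> f j r 0 = f j r"
| "nestF \<iota> f j r (Suc k) = qbr \<iota> vv (nestF \<iota> f j r k) (f (j + Suc k) 0)"

definition Eroot :: "(cv \<Rightarrow> 'a::ring_1) \<Rightarrow> (nat \<Rightarrow> int \<Rightarrow> 'a) \<Rightarrow> int \<Rightarrow> nat \<Rightarrow> nat \<Rightarrow> 'a" where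
  "Eroot \<iota> e r j i = \<iota> (vv - inverse vv) * nestE \<iota> e j r (i - j)"

definition Froot :: "(cv \<Rightarrow> 'a::ring_1) \<Rightarrow> (nat \<Rightarrow> int \<Rightarrow> 'a) \<Rightarrow> int \<Rightarrow> nat \<Rightarrow> nat \<Rightarrow> 'a" where
  "Froot \<iota> f r j i = \<iota> (inverse vv - vv) * nestF \<iota> f j r (i - j)"

end

theory Submission
  imports Defs
begin



lemma cvA:
  assumes "cv_algebra \<iota>"
  shows "\<iota> 0 = 0" "\<iota> 1 = 1" "\<iota> (x + y) = \<iota> x + \<iota> y" "\<iota> (x * y) = \<iota> x * \<iota> y"
    "\<iota> (- x) = - \<iota> x" "\<iota> (x - y) = \<iota> x - \<iota> y"
proof -
  have add: "\<And>x y. \<iota> (x + y) = \<iota> x + \<iota> y" and mul: "\<And>x y. \<iota> (x * y) = \<iota> x * \<iota> y"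
    and one: "\<iota> 1 = 1" using assms unfolding cv_algebra_def by blast+
  have z: "\<iota> 0 = 0" using add[of 0 0] by simp
  have n: "\<And>x. \<iota> (- x) = - \<iota> x" using add z by (metis add.right_inverse add_eq_0_iff2)
  show "\<iota> 0 = 0" "\<iota> 1 = 1" "\<iota> (x + y) = \<iota> x + \<iota> y" "\<iota> (x * y) = \<iota> x * \<iota> y"
    "\<iota> (- x) = - \<iota> x" "\<iota> (x - y) = \<iota> x - \<iota> y"
    using z one add mul n by (simp_all only: diff_conv_add_uminus)
qed

lemma iota_if:
  assumes "cv_algebra \<iota>"
  shows "\<iota> (if P then x else 0) = (if P then \<iota> x else 0)"
  using cvA(1)[OF assms] by simp

lemma cvC:
  assumes "cv_algebra \<iota>"
  shows "\<iota> x * z = z * \<iota> x"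
  using assms unfolding cv_algebra_def by blast

lemma gen_split:
  fixes x y z :: "'c::ring_1"
  shows "(if a' = a \<and> c' = c then z else if a' = c \<and> c' = a \<and> P then y else 0)
   = (if a' = a \<and> c' = c then z else 0) + (if a' = c \<and> c' = a \<and> P \<and> \<not> (a' = a \<and> c' = c) then y else 0)"
  by auto

lemma Rz_diag: "Rz a c a c = (if a = c then vv else 1)"
  unfolding Rz_def by simp

lemma Rw_diag: "Rw a c a c = (if a = c then - inverse vv else - 1)"
  unfolding Rw_def by simp

lemma Rz_split: "Rz a c a' c' = (if a' = a \<and> c' = c then Rz a c a c else 0)
   + (if a' = c \<and> c' = a \<and> a < c then vv - inverse vv else 0)"
proof -
  have e: "(a' = c \<and> c' = a \<and> a < c \<and> \<not> (a' = a \<and> c' = c)) = (a' = c \<and> c' = a \<and> a < c)" by auto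
  have "Rz a c a' c' = (if a' = a \<and> c' = c then (if a = c then vv else 1) else if a' = c \<and> c' = a \<and> a < c then vv - inverse vv else 0)"
    by (simp only: Rz_def)
  also have "... = (if a' = a \<and> c' = c then (if a = c then vv else 1) else 0) + (if a' = c \<and> c' = a \<and> a < c \<and> \<not> (a' = a \<and> c' = c) then vv - inverse vv else 0)"
    by (rule gen_split)
  also have "... = (if a' = a \<and> c' = c then Rz a c a c else 0)
   + (if a' = c \<and> c' = a \<and> a < c then vv - inverse vv else 0)"
    by (simp only: e Rz_diag)
  finally show ?thesis .
qed

lemma Rw_split: "Rw a c a' c' = (if a' = a \<and> c' = c then Rw a c a c else 0)
   + (if a' = c \<and> c' = a \<and> c < a then vv - inverse vv else 0)"
proof -
  have e: "(a' = c \<and> c' = a \<and> c < a \<and> \<not> (a' = a \<and> c' = c)) = (a' = c \<and> c' = a \<and> c < a)" by auto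
  have "Rw a c a' c' = (if a' = a \<and> c' = c then (if a = c then - inverse vv else - 1) else if a' = c \<and> c' = a \<and> c < a then vv - inverse vv else 0)"
    by (simp only: Rw_def)
  also have "... = (if a' = a \<and> c' = c then (if a = c then - inverse vv else - 1) else 0) + (if a' = c \<and> c' = a \<and> c < a \<and> \<not> (a' = a \<and> c' = c) then vv - inverse vv else 0)"
    by (rule gen_split)
  also have "... = (if a' = a \<and> c' = c then Rw a c a c else 0)
   + (if a' = c \<and> c' = a \<and> c < a then vv - inverse vv else 0)"
    by (simp only: e Rw_diag)
  finally show ?thesis .
qed

lemma sum2_delta:
  fixes A :: "nat \<Rightarrow> nat \<Rightarrow> 'b::ring_1"
  assumes "a \<in> {1..n}" "c \<in> {1..n}"
  shows "(\<Sum>a'\<in>{1..n}. \<Sum>c'\<in>{1..n}. (if a' = a \<and> c' = c then A a' c' else 0)) = A a c"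
proof -
  have "\<And>a'. (\<Sum>c'\<in>{1..n}. (if a' = a \<and> c' = c then A a' c' else 0)) = (if a' = a then A a c else 0)"
    using assms(2) by (cases "a' = a") auto
  then show ?thesis using assms(1) by simp
qed

lemma sum2_delta':
  fixes A :: "nat \<Rightarrow> nat \<Rightarrow> 'b::ring_1"
  assumes "a \<in> {1..n}" "c \<in> {1..n}"
  shows "(\<Sum>a'\<in>{1..n}. \<Sum>c'\<in>{1..n}. (if a' = a \<and> c' = c \<and> P then A a' c' else 0)) = (if P then A a c else 0)"
  using sum2_delta[OF assms, of A] by (cases P) auto

lemma mult_ifz: "(y::'b::ring_1) * (if P then x else 0) = (if P then y * x else 0)" by simp

lemma ifz_mult: "(if P then x else 0) * (y::'b::ring_1) = (if P then x * y else 0)" by simp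

lemma iota_Rz:
  assumes cv: "cv_algebra \<iota>"
  shows "\<iota> (Rz a c a' c') = (if a' = a \<and> c' = c \<and> True then \<iota> (if a = c then vv else 1) else 0)
     + (if a' = c \<and> c' = a \<and> a < c then \<iota> (vv - inverse vv) else 0)"
  by (subst Rz_split) (simp only: Rz_diag cvA(3)[OF cv] iota_if[OF cv] simp_thms)

lemma iota_Rw:
  assumes cv: "cv_algebra \<iota>"
  shows "\<iota> (Rw a c a' c') = (if a' = a \<and> c' = c \<and> True then \<iota> (if a = c then - inverse vv else - 1) else 0)
     + (if a' = c \<and> c' = a \<and> c < a then \<iota> (vv - inverse vv) else 0)"
  by (subst Rw_split) (simp only: Rw_diag cvA(3)[OF cv] iota_if[OF cv] simp_thms)

lemma gen_split2:
  fixes z :: "nat \<Rightarrow> nat \<Rightarrow> 'c::ring_1"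
  shows "(if b = b' \<and> d = d' then z b' d' else if b = d' \<and> d = b' \<and> P b' d' then y else 0)
   = (if b' = b \<and> d' = d then z b d else 0) + (if b' = d \<and> d' = b \<and> P d b \<and> \<not> (b' = b \<and> d' = d) then y else 0)"
  by auto

lemma Rz_split': "Rz b' d' b d = (if b' = b \<and> d' = d then Rz b d b d else 0)
   + (if b' = d \<and> d' = b \<and> d < b then vv - inverse vv else 0)"
proof -
  have e: "(b' = d \<and> d' = b \<and> d < b \<and> \<not> (b' = b \<and> d' = d)) = (b' = d \<and> d' = b \<and> d < b)" by auto
  have "Rz b' d' b d = (if b = b' \<and> d = d' then Rz b' d' b' d' else if b = d' \<and> d = b' \<and> b' < d' then vv - inverse vv else 0)"
    by (simp only: Rz_def simp_thms if_True)
  also have "... = (if b' = b \<and> d' = d then Rz b d b d else 0) + (if b' = d \<and> d' = b \<and> d < b \<and> \<not> (b' = b \<and> d' = d) then vv - inverse vv else 0)"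
    by (rule gen_split2[where z = "\<lambda>x y. Rz x y x y" and P = "\<lambda>x y. x < y"])
  finally show ?thesis by (simp only: e)
qed

lemma Rw_split': "Rw b' d' b d = (if b' = b \<and> d' = d then Rw b d b d else 0)
   + (if b' = d \<and> d' = b \<and> b < d then vv - inverse vv else 0)"
proof -
  have e: "(b' = d \<and> d' = b \<and> b < d \<and> \<not> (b' = b \<and> d' = d)) = (b' = d \<and> d' = b \<and> b < d)" by auto
  have "Rw b' d' b d = (if b = b' \<and> d = d' then Rw b' d' b' d' else if b = d' \<and> d = b' \<and> d' < b' then vv - inverse vv else 0)"
    by (simp only: Rw_def simp_thms if_True)
  also have "... = (if b' = b \<and> d' = d then Rw b d b d else 0) + (if b' = d \<and> d' = b \<and> b < d \<and> \<not> (b' = b \<and> d' = d) then vv - inverse vv else 0)"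
    by (rule gen_split2[where z = "\<lambda>x y. Rw x y x y" and P = "\<lambda>x y. y < x"])
  finally show ?thesis by (simp only: e)
qed

lemma iota_Rz':
  assumes cv: "cv_algebra \<iota>"
  shows "\<iota> (Rz b' d' b d) = (if b' = b \<and> d' = d \<and> True then \<iota> (if b = d then vv else 1) else 0)
     + (if b' = d \<and> d' = b \<and> d < b then \<iota> (vv - inverse vv) else 0)"
  by (subst Rz_split') (simp only: Rz_diag cvA(3)[OF cv] iota_if[OF cv] simp_thms)

lemma iota_Rw':
  assumes cv: "cv_algebra \<iota>"
  shows "\<iota> (Rw b' d' b d) = (if b' = b \<and> d' = d \<and> True then \<iota> (if b = d then - inverse vv else - 1) else 0)
     + (if b' = d \<and> d' = b \<and> b < d then \<iota> (vv - inverse vv) else 0)"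
  by (subst Rw_split') (simp only: Rw_diag cvA(3)[OF cv] iota_if[OF cv] simp_thms)

lemma sumL:
  fixes X1 Y1 X2 Y2 :: "nat \<Rightarrow> 'b::ring_1"
  assumes cv: "cv_algebra \<iota>" and ac: "a \<in> {1..n}" "c \<in> {1..n}"
  shows "(\<Sum>a'\<in>{1..n}. \<Sum>c'\<in>{1..n}. \<iota> (Rz a c a' c') * X1 a' * Y1 c' + \<iota> (Rw a c a' c') * X2 a' * Y2 c')
     = (if True then \<iota> (if a = c then vv else 1) * X1 a * Y1 c else 0)
       + (if a < c then \<iota> (vv - inverse vv) * X1 c * Y1 a else 0)
       + ((if True then \<iota> (if a = c then - inverse vv else - 1) * X2 a * Y2 c else 0)
       + (if c < a then \<iota> (vv - inverse vv) * X2 c * Y2 a else 0))"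
  apply (simp only: iota_Rz[OF cv, of a c] iota_Rw[OF cv, of a c] distrib_right ifz_mult sum.distrib)
  apply (simp only: sum2_delta'[OF ac] sum2_delta'[OF ac(2) ac(1)])
  done

lemma sumR:
  fixes U1 V1 U2 V2 :: "nat \<Rightarrow> 'b::ring_1"
  assumes cv: "cv_algebra \<iota>" and bd: "b \<in> {1..n}" "d \<in> {1..n}"
  shows "(\<Sum>b'\<in>{1..n}. \<Sum>d'\<in>{1..n}. U1 d' * V1 b' * \<iota> (Rz b' d' b d) + U2 d' * V2 b' * \<iota> (Rw b' d' b d))
     = (if True then U1 d * V1 b * \<iota> (if b = d then vv else 1) else 0)
       + (if d < b then U1 b * V1 d * \<iota> (vv - inverse vv) else 0)
       + ((if True then U2 d * V2 b * \<iota> (if b = d then - inverse vv else - 1) else 0)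
       + (if b < d then U2 b * V2 d * \<iota> (vv - inverse vv) else 0))"
  apply (simp only: iota_Rz'[OF cv, of b' d' b d for b' d'] iota_Rw'[OF cv, of b' d' b d for b' d'] distrib_left mult_ifz sum.distrib)
  apply (simp only: sum2_delta'[OF bd] sum2_delta'[OF bd(2) bd(1)])
  done




lemma rtt_at:
  assumes "rtt_rel \<iota> n X Y" "a \<in> {1..n}" "b \<in> {1..n}" "c \<in> {1..n}" "d \<in> {1..n}"
  shows "(\<Sum>a'\<in>{1..n}. \<Sum>c'\<in>{1..n}.
          \<iota> (Rz a c a' c') * X a' b (p - 1) * Y c' d q
        + \<iota> (Rw a c a' c') * X a' b p * Y c' d (q - 1))
    = (\<Sum>b'\<in>{1..n}. \<Sum>d'\<in>{1..n}.
          Y c d' q * X a b' (p - 1) * \<iota> (Rz b' d' b d)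
        + Y c d' (q - 1) * X a b' p * \<iota> (Rw b' d' b d))"
  using assms unfolding rtt_rel_def by blast

lemma Lp_vals: "Lp x a b 0 = x a b 0" "Lp x a b 1 = 0" "Lp x a b (- int s) = x a b s"
  by (auto simp: Lp_def)

lemma Lm_vals: "Lm x a b 0 = x a b 0" "Lm x a b (- 1) = 0" "Lm x a b (int s) = x a b s"
  by (auto simp: Lm_def)

lemma R1:
  assumes cv: "cv_algebra \<iota>" and r: "rtt_rel \<iota> n (Lp tp) (Lp tp)"
    and abcd: "a \<in> {1..n}" "b \<in> {1..n}" "c \<in> {1..n}" "d \<in> {1..n}"
  shows "\<iota> (if a = c then vv else 1) * tp a b 0 * tp c d s
      + (if a < c then \<iota> (vv - inverse vv) * tp c b 0 * tp a d s else 0)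
    = tp c d s * tp a b 0 * \<iota> (if b = d then vv else 1)
      + (if d < b then tp c b s * tp a d 0 * \<iota> (vv - inverse vv) else 0)"
proof -
  have "(\<Sum>a'\<in>{1..n}. \<Sum>c'\<in>{1..n}.
          \<iota> (Rz a c a' c') * Lp tp a' b (1 - 1) * Lp tp c' d (- int s)
        + \<iota> (Rw a c a' c') * Lp tp a' b 1 * Lp tp c' d (- int s - 1))
    = (\<Sum>b'\<in>{1..n}. \<Sum>d'\<in>{1..n}.
          Lp tp c d' (- int s) * Lp tp a b' (1 - 1) * \<iota> (Rz b' d' b d)
        + Lp tp c d' (- int s - 1) * Lp tp a b' 1 * \<iota> (Rw b' d' b d))"
    by (rule rtt_at[OF r abcd])
  then show ?thesis
    apply (simp only: sumL[OF cv abcd(1,3)] sumR[OF cv abcd(2,4)])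
    apply (simp only: Lp_vals diff_self mult_zero_right mult_zero_left add_0_right if_True if_cancel add_0_left add_0_right)
    done
qed

lemma R2:
  assumes cv: "cv_algebra \<iota>" and r: "rtt_rel \<iota> n (Lm tm) (Lp tp)"
    and abcd: "a \<in> {1..n}" "b \<in> {1..n}" "c \<in> {1..n}" "d \<in> {1..n}"
  shows "\<iota> (if a = c then - inverse vv else - 1) * tm a b s * tp c d 0
      + (if c < a then \<iota> (vv - inverse vv) * tm c b s * tp a d 0 else 0)
    = tp c d 0 * tm a b s * \<iota> (if b = d then - inverse vv else - 1)
      + (if b < d then tp c b 0 * tm a d s * \<iota> (vv - inverse vv) else 0)"
proof -
  have "(\<Sum>a'\<in>{1..n}. \<Sum>c'\<in>{1..n}.
          \<iota> (Rz a c a' c') * Lm tm a' b (int s - 1) * Lp tp c' d 1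
        + \<iota> (Rw a c a' c') * Lm tm a' b (int s) * Lp tp c' d (1 - 1))
    = (\<Sum>b'\<in>{1..n}. \<Sum>d'\<in>{1..n}.
          Lp tp c d' 1 * Lm tm a b' (int s - 1) * \<iota> (Rz b' d' b d)
        + Lp tp c d' (1 - 1) * Lm tm a b' (int s) * \<iota> (Rw b' d' b d))"
    by (rule rtt_at[OF r abcd])
  then show ?thesis
    apply (simp only: sumL[OF cv abcd(1,3)] sumR[OF cv abcd(2,4)])
    apply (simp only: Lp_vals Lm_vals diff_self mult_zero_right mult_zero_left add_0_left add_0_right if_True if_cancel add_0_left add_0_right)
    done
qed

lemma R34:
  assumes cv: "cv_algebra \<iota>" and r: "rtt_rel \<iota> n (Lm tm) Y"
    and abcd: "a \<in> {1..n}" "b \<in> {1..n}" "c \<in> {1..n}" "d \<in> {1..n}"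
  shows "\<iota> (if a = c then - inverse vv else - 1) * tm a b 0 * Y c d q
      + (if c < a then \<iota> (vv - inverse vv) * tm c b 0 * Y a d q else 0)
    = Y c d q * tm a b 0 * \<iota> (if b = d then - inverse vv else - 1)
      + (if b < d then Y c b q * tm a d 0 * \<iota> (vv - inverse vv) else 0)"
proof -
  have "(\<Sum>a'\<in>{1..n}. \<Sum>c'\<in>{1..n}.
          \<iota> (Rz a c a' c') * Lm tm a' b (0 - 1) * Y c' d (q + 1)
        + \<iota> (Rw a c a' c') * Lm tm a' b 0 * Y c' d (q + 1 - 1))
    = (\<Sum>b'\<in>{1..n}. \<Sum>d'\<in>{1..n}.
          Y c d' (q + 1) * Lm tm a b' (0 - 1) * \<iota> (Rz b' d' b d)
        + Y c d' (q + 1 - 1) * Lm tm a b' 0 * \<iota> (Rw b' d' b d))"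
    by (rule rtt_at[OF r abcd])
  then show ?thesis
    apply (simp only: sumL[OF cv abcd(1,3)] sumR[OF cv abcd(2,4)])
    apply (simp only: Lm_vals diff_self diff_0 add_diff_cancel_right' mult_zero_right mult_zero_left add_0_left add_0_right if_True if_cancel add_0_left add_0_right)
    done
qed




lemma vv_nz: "vv \<noteq> 0"
proof
  assume "vv = 0"
  then have "Fract [:0, 1:] 1 = Fract (0 :: complex poly) 1" unfolding vv_def Zero_fract_def by simp
  then have "[:0, 1:] * 1 = (0 :: complex poly) * 1" by (subst (asm) eq_fract(1)) auto
  then show False by simp
qed

lemma vv_sq: "vv * vv \<noteq> 1"
proof
  assume "vv * vv = 1"
  then have "Fract ([:0, 1:] * [:0, 1:]) 1 = Fract (1 :: complex poly) 1" unfolding vv_def One_fract_def by simp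
  then have "[:0, 1:] * [:0, 1:] * 1 = (1 :: complex poly) * 1" by (subst (asm) eq_fract(1)) auto
  then have "degree ([:0, 1:] * [:0, 1:] :: complex poly) = degree (1 :: complex poly)" by simp
  then show False by (simp add: degree_mult_eq)
qed

lemma vk_nz: "vv - inverse vv \<noteq> 0"
proof
  assume "vv - inverse vv = 0"
  then have "vv * (vv - inverse vv) = 0" by simp
  then have "vv * vv - vv * inverse vv = 0" by (simp only: right_diff_distrib)
  then have "vv * vv = 1" using vv_nz by (simp add: right_inverse)
  then show False using vv_sq by simp
qed

lemma vv_inv: "vv * inverse vv = 1" "inverse vv * vv = 1"
  using vv_nz by auto


definition QE :: "(cv \<Rightarrow> 'b::ring_1) \<Rightarrow> 'b \<Rightarrow> 'b \<Rightarrow> 'b \<Rightarrow> 'b \<Rightarrow> bool" where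
  "QE \<iota> X Y x1 x2 \<longleftrightarrow> Y * x1 = \<iota> vv * x1 * Y \<and> Y * x2 = x2 * Y
     \<and> X * x1 = x1 * X + \<iota> (vv - inverse vv) * x2 * Y"

definition QF :: "(cv \<Rightarrow> 'b::ring_1) \<Rightarrow> 'b \<Rightarrow> 'b \<Rightarrow> 'b \<Rightarrow> 'b \<Rightarrow> bool" where
  "QF \<iota> X Y x1 x2 \<longleftrightarrow> Y * x1 = \<iota> vv * x1 * Y \<and> Y * x2 = x2 * Y
     \<and> x1 * X = X * x1 - \<iota> (vv - inverse vv) * Y * x2"

definition cm :: "'b::ring_1 \<Rightarrow> 'b \<Rightarrow> 'b \<Rightarrow> bool" where
  "cm X Y x \<longleftrightarrow> x * X = X * x \<and> x * Y = Y * x"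

lemma rtt_model_D:
  assumes "rtt_model \<iota> n tp tm"
  shows "rtt_rel \<iota> n (Lp tp) (Lp tp)" "rtt_rel \<iota> n (Lm tm) (Lm tm)" "rtt_rel \<iota> n (Lm tm) (Lp tp)"
    "\<And>a b. a \<in> {1..n} \<Longrightarrow> b \<in> {1..n} \<Longrightarrow> b < a \<Longrightarrow> tp a b 0 = 0"
    "\<And>a b. a \<in> {1..n} \<Longrightarrow> b \<in> {1..n} \<Longrightarrow> b < a \<Longrightarrow> tm b a 0 = 0"
    "\<And>a. a \<in> {1..n} \<Longrightarrow> tp a a 0 * tm a a 0 = 1"
    "\<And>a. a \<in> {1..n} \<Longrightarrow> tm a a 0 * tp a a 0 = 1"
  using assms unfolding rtt_model_def by blast+

lemma iota_m1: "cv_algebra \<iota> \<Longrightarrow> \<iota> (- 1) = - 1"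
  by (simp add: cvA)

lemma iota_vv_inv: "cv_algebra \<iota> \<Longrightarrow> \<iota> vv * \<iota> (inverse vv) = 1" "cv_algebra \<iota> \<Longrightarrow> \<iota> (inverse vv) * \<iota> vv = 1"
  by (simp_all add: cvA(4)[symmetric] vv_inv cvA(2))

lemma cvC3: "cv_algebra \<iota> \<Longrightarrow> \<iota> c * x * y = x * y * \<iota> c"
  by (metis cvC mult.assoc)

lemma E_plus_rel:
  assumes cv: "cv_algebra \<iota>" and m: "rtt_model \<iota> n tp tm" and i: "1 \<le> i" "i < n"
  shows "\<And>k. k \<in> {1..<i} \<Longrightarrow> QE \<iota> (tp i (i+1) 0) (tp i i 0) (tp k i s) (tp k (i+1) s)"
    and "\<And>c d. c \<in> {1..<i} \<Longrightarrow> d \<in> {1..<i} \<Longrightarrow> cm (tp i (i+1) 0) (tp i i 0) (tp c d s)"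
proof -
  note R = R1[OF cv rtt_model_D(1)[OF m]]
  note z = rtt_model_D(4)[OF m]
  note C = cvC[OF cv]
  fix k assume k: "k \<in> {1..<i}"
  have a: "tp i (i+1) 0 * tp k i s = tp k i s * tp i (i+1) 0 + tp k (i+1) s * tp i i 0 * \<iota> (vv - inverse vv)"
    using R[of i "i+1" k i s] i k by (simp add: cvA(2)[OF cv])
  have b: "tp i i 0 * tp k i s = tp k i s * tp i i 0 * \<iota> vv"
    using R[of i i k i s] i k by (simp add: cvA(2)[OF cv])
  have c: "tp i i 0 * tp k (i+1) s = tp k (i+1) s * tp i i 0"
    using R[of i i k "i+1" s] i k by (simp add: cvA(2)[OF cv])
  show "QE \<iota> (tp i (i+1) 0) (tp i i 0) (tp k i s) (tp k (i+1) s)"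
    unfolding QE_def by (simp only: a b c cvC3[OF cv] simp_thms)
next
  note R = R1[OF cv rtt_model_D(1)[OF m]]
  note z = rtt_model_D(4)[OF m]
  fix c d assume cd: "c \<in> {1..<i}" "d \<in> {1..<i}"
  have "tp i (i+1) 0 * tp c d s = tp c d s * tp i (i+1) 0"
    using R[of i "i+1" c d s] i cd z[of i d] by (simp add: cvA(2)[OF cv])
  moreover have "tp i i 0 * tp c d s = tp c d s * tp i i 0"
    using R[of i i c d s] i cd z[of i d] by (simp add: cvA(2)[OF cv])
  ultimately show "cm (tp i (i+1) 0) (tp i i 0) (tp c d s)" unfolding cm_def by simp
qed


lemma neg_rearr: "- (a::'b::ring_1) = - b + w \<Longrightarrow> b = a + w"
proof -
  assume h: "- a = - b + w"
  have "b = - (- b + w) + w" by simp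
  also have "\<dots> = - (- a) + w" by (simp only: h)
  finally show ?thesis by simp
qed

lemma neg_rearr2: "- (a::'b::ring_1) + w = - b \<Longrightarrow> a = b + w"
proof -
  assume h: "- a + w = - b"
  have "a = - (- a + w) + w" by simp
  also have "\<dots> = b + w" by (simp only: h minus_minus)
  finally show ?thesis .
qed

lemma neg_eq: "- (a::'b::ring_1) = - b \<Longrightarrow> a = b" by simp

lemma E_minus_rel:
  assumes cv: "cv_algebra \<iota>" and m: "rtt_model \<iota> n tp tm" and i: "1 \<le> i" "i < n"
  shows "\<And>k. k \<in> {1..<i} \<Longrightarrow> QE \<iota> (tp i (i+1) 0) (tp i i 0) (tm k i s) (tm k (i+1) s)"
    and "\<And>c d. c \<in> {1..<i} \<Longrightarrow> d \<in> {1..<i} \<Longrightarrow> cm (tp i (i+1) 0) (tp i i 0) (tm c d s)"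
proof -
  note R = R2[OF cv rtt_model_D(3)[OF m]]
  note z = rtt_model_D(4)[OF m]
  fix k assume k: "k \<in> {1..<i}"
  have a0: "- (tm k i s * tp i (i+1) 0) = - (tp i (i+1) 0 * tm k i s) + tp i i 0 * tm k (i+1) s * \<iota> (vv - inverse vv)"
    using R[of k i i "i+1" s] i k by (simp add: iota_m1[OF cv])
  have b0: "- (tm k i s * tp i i 0) = - (tp i i 0 * tm k i s * \<iota> (inverse vv))"
    using R[of k i i i s] i k by (simp add: iota_m1[OF cv] cvA(5)[OF cv] cvA(2)[OF cv])
  have c0: "- (tm k (i+1) s * tp i i 0) = - (tp i i 0 * tm k (i+1) s)"
    using R[of k "i+1" i i s] i k by (simp add: iota_m1[OF cv])
  have c: "tp i i 0 * tm k (i+1) s = tm k (i+1) s * tp i i 0" using neg_eq[OF c0] by simp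
  have a: "tp i (i+1) 0 * tm k i s = tm k i s * tp i (i+1) 0 + \<iota> (vv - inverse vv) * tm k (i+1) s * tp i i 0"
    using neg_rearr[OF a0] by (simp only: c cvC3[OF cv])
  have b1: "tm k i s * tp i i 0 = tp i i 0 * tm k i s * \<iota> (inverse vv)" using neg_eq[OF b0] .
  have b: "tp i i 0 * tm k i s = \<iota> vv * tm k i s * tp i i 0"
  proof -
    have "tp i i 0 * tm k i s = tp i i 0 * tm k i s * (\<iota> (inverse vv) * \<iota> vv)"
      by (simp add: iota_vv_inv(2)[OF cv])
    also have "\<dots> = tm k i s * tp i i 0 * \<iota> vv" by (simp only: b1 mult.assoc)
    also have "\<dots> = \<iota> vv * tm k i s * tp i i 0" by (simp only: cvC3[OF cv])
    finally show ?thesis .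
  qed
  show "QE \<iota> (tp i (i+1) 0) (tp i i 0) (tm k i s) (tm k (i+1) s)"
    unfolding QE_def using a b c by blast
next
  note R = R2[OF cv rtt_model_D(3)[OF m]]
  note z = rtt_model_D(4)[OF m]
  fix c d assume cd: "c \<in> {1..<i}" "d \<in> {1..<i}"
  have "- (tm c d s * tp i (i+1) 0) = - (tp i (i+1) 0 * tm c d s)"
    using R[of c d i "i+1" s] i cd z[of i d] by (simp add: iota_m1[OF cv])
  moreover have "- (tm c d s * tp i i 0) = - (tp i i 0 * tm c d s)"
    using R[of c d i i s] i cd z[of i d] by (simp add: iota_m1[OF cv])
  ultimately show "cm (tp i (i+1) 0) (tp i i 0) (tm c d s)" unfolding cm_def by simp
qed

lemma F_rel_gen:
  assumes cv: "cv_algebra \<iota>" and m: "rtt_model \<iota> n tp tm" and i: "1 \<le> i" "i < n"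
    and R: "\<And>a b c d. a \<in> {1..n} \<Longrightarrow> b \<in> {1..n} \<Longrightarrow> c \<in> {1..n} \<Longrightarrow> d \<in> {1..n} \<Longrightarrow>
      \<iota> (if a = c then - inverse vv else - 1) * tm a b 0 * T2 c d
      + (if c < a then \<iota> (vv - inverse vv) * tm c b 0 * T2 a d else 0)
    = T2 c d * tm a b 0 * \<iota> (if b = d then - inverse vv else - 1)
      + (if b < d then T2 c b * tm a d 0 * \<iota> (vv - inverse vv) else 0)"
  shows "\<And>k. k \<in> {1..<i} \<Longrightarrow> QF \<iota> (tm (i+1) i 0) (tm i i 0) (T2 i k) (T2 (i+1) k)"
    and "\<And>c d. c \<in> {1..<i} \<Longrightarrow> d \<in> {1..<i} \<Longrightarrow> cm (tm (i+1) i 0) (tm i i 0) (T2 c d)"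
proof -
  note z = rtt_model_D(5)[OF m]
  fix k assume k: "k \<in> {1..<i}"
  have a0: "- (tm (i+1) i 0 * T2 i k) + \<iota> (vv - inverse vv) * tm i i 0 * T2 (i+1) k = - (T2 i k * tm (i+1) i 0)"
    using R[of "i+1" i i k] i k by (simp add: iota_m1[OF cv])
  have b0: "- (\<iota> (inverse vv) * tm i i 0 * T2 i k) = - (T2 i k * tm i i 0)"
    using R[of i i i k] i k by (simp add: iota_m1[OF cv] cvA(5)[OF cv] cvA(2)[OF cv])
  have c0: "- (tm i i 0 * T2 (i+1) k) = - (T2 (i+1) k * tm i i 0)"
    using R[of i i "i+1" k] i k by (simp add: iota_m1[OF cv])
  have c: "tm i i 0 * T2 (i+1) k = T2 (i+1) k * tm i i 0" using neg_eq[OF c0] .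
  have a1: "tm (i+1) i 0 * T2 i k = T2 i k * tm (i+1) i 0 + \<iota> (vv - inverse vv) * tm i i 0 * T2 (i+1) k"
    using neg_rearr2[OF a0] .
  have a: "T2 i k * tm (i+1) i 0 = tm (i+1) i 0 * T2 i k - \<iota> (vv - inverse vv) * tm i i 0 * T2 (i+1) k"
    using a1 by (simp add: algebra_simps)
  have b1: "\<iota> (inverse vv) * tm i i 0 * T2 i k = T2 i k * tm i i 0" using neg_eq[OF b0] .
  have b: "tm i i 0 * T2 i k = \<iota> vv * T2 i k * tm i i 0"
  proof -
    have "tm i i 0 * T2 i k = \<iota> vv * \<iota> (inverse vv) * tm i i 0 * T2 i k"
      by (simp add: iota_vv_inv(1)[OF cv])
    also have "\<dots> = \<iota> vv * (\<iota> (inverse vv) * tm i i 0 * T2 i k)" by (simp only: mult.assoc)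
    also have "\<dots> = \<iota> vv * (T2 i k * tm i i 0)" by (simp only: b1)
    also have "\<dots> = \<iota> vv * T2 i k * tm i i 0" by (simp only: mult.assoc)
    finally show ?thesis .
  qed
  show "QF \<iota> (tm (i+1) i 0) (tm i i 0) (T2 i k) (T2 (i+1) k)"
    unfolding QF_def using a b c by blast
next
  note z = rtt_model_D(5)[OF m]
  fix c d assume cd: "c \<in> {1..<i}" "d \<in> {1..<i}"
  have "- (tm (i+1) i 0 * T2 c d) = - (T2 c d * tm (i+1) i 0)"
    using R[of "i+1" i c d] i cd z[of i c] by (simp add: iota_m1[OF cv])
  moreover have "- (tm i i 0 * T2 c d) = - (T2 c d * tm i i 0)"
    using R[of i i c d] i cd z[of i c] by (simp add: iota_m1[OF cv])
  ultimately show "cm (tm (i+1) i 0) (tm i i 0) (T2 c d)" unfolding cm_def by simp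
qed




lemma cm_0: "cm X Y 0" and cm_1: "cm X Y 1" unfolding cm_def by simp_all

lemma cm_add: "cm X Y a \<Longrightarrow> cm X Y b \<Longrightarrow> cm X Y (a + b)"
  unfolding cm_def by (simp add: distrib_left distrib_right)

lemma cm_diff: "cm X Y a \<Longrightarrow> cm X Y b \<Longrightarrow> cm X Y (a - b)"
  unfolding cm_def by (simp add: left_diff_distrib right_diff_distrib)

lemma cm_mult: "cm X Y a \<Longrightarrow> cm X Y b \<Longrightarrow> cm X Y (a * b)"
  unfolding cm_def by (metis mult.assoc)

lemma cm_if: "cm X Y a \<Longrightarrow> cm X Y (if P then a else 0)"
  by (cases P) (simp_all add: cm_0)

lemma cm_sum: "finite A \<Longrightarrow> (\<And>x. x \<in> A \<Longrightarrow> cm X Y (f x)) \<Longrightarrow> cm X Y (sum f A)"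
  by (induction A rule: finite_induct) (auto intro: cm_0 cm_add)

lemma cm_inv:
  assumes "cm X Y g" "g * h = 1" "h * g = 1"
  shows "cm X Y h"
proof -
  have "\<And>Z. g * Z = Z * g \<Longrightarrow> h * Z = Z * h"
  proof -
    fix Z assume gz: "g * Z = Z * g"
    have "h * Z = h * Z * (g * h)" using assms(2) by simp
    also have "\<dots> = h * (Z * g) * h" by (simp add: mult.assoc)
    also have "\<dots> = h * (g * Z) * h" by (simp only: gz)
    also have "\<dots> = (h * g) * Z * h" by (simp add: mult.assoc)
    also have "\<dots> = Z * h" using assms(3) by simp
    finally show "h * Z = Z * h" .
  qed
  then show ?thesis using assms(1) unfolding cm_def by metis
qed

lemma sum_if_const: "(\<Sum>q\<in>A. if P then f q else 0) = (if P then (\<Sum>q\<in>A. f q) else (0::'b::ring_1))"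
  by (cases P) simp_all

lemma conv3_Fdiag:
  fixes Gm E :: "nat \<Rightarrow> 'b::ring_1"
  shows "conv3 (\<lambda>p. if p = 0 then 1 else 0) Gm E s = (\<Sum>q\<le>s. Gm q * E (s - q))"
proof -
  have "conv3 (\<lambda>p. if p = 0 then 1 else 0) Gm E s
     = (\<Sum>p\<le>s. if p = 0 then (\<Sum>q\<le>s - p. Gm q * E (s - p - q)) else 0)"
    unfolding conv3_def by (intro sum.cong refl) (simp add: sum_if_const)
  also have "\<dots> = (\<Sum>q\<le>s. Gm q * E (s - q))" by (simp add: sum.delta)
  finally show ?thesis .
qed

lemma conv3_Ediag:
  fixes Gm F :: "nat \<Rightarrow> 'b::ring_1"
  shows "conv3 F Gm (\<lambda>u. if u = 0 then 1 else 0) s = (\<Sum>p\<le>s. F p * Gm (s - p))"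
  unfolding conv3_def
proof (intro sum.cong refl)
  fix p assume p: "p \<in> {..s}"
  have "(\<Sum>q\<le>s - p. F p * Gm q * (if s - p - q = 0 then 1 else 0))
      = (\<Sum>q\<le>s - p. if q = s - p then F p * Gm q else 0)"
    by (intro sum.cong refl) auto
  also have "\<dots> = F p * Gm (s - p)" by (simp add: sum.delta)
  finally show "(\<Sum>q\<le>s - p. F p * Gm q * (if s - p - q = 0 then 1 else 0)) = F p * Gm (s - p)" .
qed

lemma sum_split0: "(\<Sum>q\<le>(s::nat). f q) = f 0 + (\<Sum>q\<in>{1..s}. f q)"
proof -
  have "{..s} = insert 0 {1..s}" by auto
  then show ?thesis by simp
qed

lemma sum_splitlast: "(\<Sum>p\<le>(s::nat). f p) = f s + (\<Sum>p<s. f p)"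
  by (simp add: lessThan_Suc_atMost[symmetric] add.commute)

lemma min_split: "(\<Sum>k\<in>{1..(m::nat)}. f k) = (\<Sum>k\<in>{1..<m}. f k) + (if 1 \<le> m then f m else 0)"
proof (cases "1 \<le> m")
  case True
  then have "{1..m} = insert m {1..<m}" by auto
  then show ?thesis using True by (simp add: add.commute)
next
  case False then show ?thesis by simp
qed

section \<open>The abstract Gauss decomposition\<close>

definition gd :: "nat \<Rightarrow> (nat \<Rightarrow> nat \<Rightarrow> nat \<Rightarrow> 'b::ring_1) \<Rightarrow> (nat \<Rightarrow> nat \<Rightarrow> nat \<Rightarrow> 'b)
   \<Rightarrow> (nat \<Rightarrow> nat \<Rightarrow> 'b) \<Rightarrow> (nat \<Rightarrow> nat \<Rightarrow> nat \<Rightarrow> 'b) \<Rightarrow> (nat \<Rightarrow> 'b) \<Rightarrow> bool" where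
  "gd N T Fc G Ec Gi \<longleftrightarrow>
    (\<forall>a\<in>{1..N}. \<forall>b\<in>{1..N}. \<forall>s. T a b s = (\<Sum>k\<in>{1..min a b}. conv3 (Fc a k) (G k) (Ec k b) s)) \<and>
    (\<forall>a p. Fc a a p = (if p = 0 then 1 else 0)) \<and>
    (\<forall>k u. Ec k k u = (if u = 0 then 1 else 0)) \<and>
    (\<forall>k\<in>{1..N}. G k 0 * Gi k = 1 \<and> Gi k * G k 0 = 1)"

lemma gd_H1:
  assumes g: "gd N T Fc G Ec Gi" and mb: "m \<in> {1..N}" "b \<in> {1..N}" "m \<le> b"
  shows "T m b s = (\<Sum>k\<in>{1..<m}. conv3 (Fc m k) (G k) (Ec k b) s) + G m 0 * Ec m b s
     + (\<Sum>q\<in>{1..s}. G m q * Ec m b (s - q))"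
proof -
  have dec: "T m b s = (\<Sum>k\<in>{1..m}. conv3 (Fc m k) (G k) (Ec k b) s)"
    using g mb unfolding gd_def by (simp add: min_def)
  have Fd: "Fc m m = (\<lambda>p. if p = 0 then 1 else 0)" using g unfolding gd_def by auto
  show ?thesis using mb
    apply (subst dec) apply (subst min_split)
    by (simp add: Fd conv3_Fdiag sum_split0 add.assoc)
qed

lemma gd_H2:
  assumes g: "gd N T Fc G Ec Gi" and ma: "m \<in> {1..N}" "a \<in> {1..N}" "m \<le> a"
  shows "T a m s = (\<Sum>k\<in>{1..<m}. conv3 (Fc a k) (G k) (Ec k m) s) + Fc a m s * G m 0
     + (\<Sum>p<s. Fc a m p * G m (s - p))"
proof -
  have dec: "T a m s = (\<Sum>k\<in>{1..m}. conv3 (Fc a k) (G k) (Ec k m) s)"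
    using g ma unfolding gd_def by (simp add: min_def)
  have Ed: "Ec m m = (\<lambda>u. if u = 0 then 1 else 0)" using g unfolding gd_def by auto
  show ?thesis using ma
    apply (subst dec) apply (subst min_split)
    by (simp add: Ed conv3_Ediag sum_splitlast add.assoc)
qed

lemma gd_Gi:
  assumes g: "gd N T Fc G Ec Gi" and m: "m \<in> {1..N}"
  shows "G m 0 * Gi m = 1" "Gi m * G m 0 = 1"
  using g m unfolding gd_def by auto

lemma solve_left:
  fixes T L g x R gi :: "'b::ring_1"
  assumes "T = L + g * x + R" "gi * g = 1"
  shows "x = gi * (T - L - R)"
proof -
  have "T - L - R = g * x" using assms(1) by simp
  then have "gi * (T - L - R) = gi * g * x" by (simp add: mult.assoc)
  then show ?thesis using assms(2) by simp
qed

lemma solve_right: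
  fixes T L g x R gi :: "'b::ring_1"
  assumes "T = L + x * g + R" "g * gi = 1"
  shows "x = (T - L - R) * gi"
proof -
  have "T - L - R = x * g" using assms(1) by simp
  then have "(T - L - R) * gi = x * (g * gi)" by (simp add: mult.assoc)
  then show ?thesis using assms(2) by simp
qed




lemma gd_H3:
  assumes g: "gd N T Fc G Ec Gi" and m: "m \<in> {1..N}"
  shows "T m m s = (\<Sum>k\<in>{1..<m}. conv3 (Fc m k) (G k) (Ec k m) s) + G m s"
proof -
  have dec: "T m m s = (\<Sum>k\<in>{1..m}. conv3 (Fc m k) (G k) (Ec k m) s)"
    using g m unfolding gd_def by simp
  have Fd: "Fc m m = (\<lambda>p. if p = 0 then 1 else 0)" using g unfolding gd_def by auto
  have Ed: "Ec m m = (\<lambda>u. if u = 0 then 1 else 0)" using g unfolding gd_def by auto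
  have "(\<Sum>q\<le>s. G m q * (if s - q = 0 then 1 else 0)) = (\<Sum>q\<le>s. if q = s then G m q else 0)"
    by (intro sum.cong refl) auto
  also have "\<dots> = G m s" by (simp add: sum.delta)
  finally have e: "(\<Sum>q\<le>s. G m q * (if s - q = 0 then 1 else 0)) = G m s" .
  show ?thesis using m
    apply (subst dec) apply (subst min_split)
    by (simp add: Fd Ed conv3_Fdiag e mult_ifz sum.delta')
qed

lemma Ed_gd: "gd N T Fc G Ec Gi \<Longrightarrow> Ec k k u = (if u = 0 then 1 else 0)"
  unfolding gd_def by auto

lemma Fd_gd: "gd N T Fc G Ec Gi \<Longrightarrow> Fc k k u = (if u = 0 then 1 else 0)"
  unfolding gd_def by auto

lemma cm_conv3:
  assumes "\<And>p. cm X Y (F p)" "\<And>q. cm X Y (Gm q)" "\<And>u. cm X Y (E u)"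
  shows "cm X Y (conv3 F Gm E s)"
  unfolding conv3_def by (intro cm_sum finite_atMost cm_mult assms)

lemma gd_cm:
  assumes g: "gd N T Fc G Ec Gi" and M: "M \<le> N"
    and hT: "\<And>a b s. a \<in> {1..M} \<Longrightarrow> b \<in> {1..M} \<Longrightarrow> cm X Y (T a b s)"
  shows "m \<in> {1..M} \<Longrightarrow> cm X Y (G m s) \<and> (\<forall>b\<in>{m..M}. cm X Y (Ec m b s)) \<and> (\<forall>a\<in>{m..M}. cm X Y (Fc a m s))"
proof (induction m arbitrary: s rule: less_induct)
  case (less m)
  note IHm = less.IH
  have mM: "m \<in> {1..M}" using less.prems .
  have mN: "m \<in> {1..N}" using mM M by auto
  have lowconv: "\<And>a b k s'. k \<in> {1..<m} \<Longrightarrow> a \<in> {k..M} \<Longrightarrow> b \<in> {k..M} \<Longrightarrow> cm X Y (conv3 (Fc a k) (G k) (Ec k b) s')"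
  proof -
    fix a b k s' assume k: "k \<in> {1..<m}" and a: "a \<in> {k..M}" and b: "b \<in> {k..M}"
    have kM: "k \<in> {1..M}" using k mM by auto
    show "cm X Y (conv3 (Fc a k) (G k) (Ec k b) s')"
      by (rule cm_conv3) (use IHm[of k] k kM a b in auto)
  qed
  have lowsumE: "\<And>b s'. b \<in> {m..M} \<Longrightarrow> cm X Y (\<Sum>k\<in>{1..<m}. conv3 (Fc m k) (G k) (Ec k b) s')"
    by (rule cm_sum) (auto intro!: lowconv)
  have lowsumF: "\<And>a s'. a \<in> {m..M} \<Longrightarrow> cm X Y (\<Sum>k\<in>{1..<m}. conv3 (Fc a k) (G k) (Ec k m) s')"
    by (rule cm_sum) (use mM in \<open>auto intro!: lowconv\<close>)
  show ?case
  proof (induction s rule: less_induct)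
    case (less s)
    note IHs = less.IH
    have Gs: "cm X Y (G m s)"
    proof -
      have "G m s = T m m s - (\<Sum>k\<in>{1..<m}. conv3 (Fc m k) (G k) (Ec k m) s)"
        using gd_H3[OF g mN, of s] by simp
      then show ?thesis using hT[OF mM mM] lowsumE[of m s] mM by (auto intro: cm_diff)
    qed
    have G0: "cm X Y (G m 0)"
      using Gs IHs[of 0] by (cases s) auto
    have Gi: "cm X Y (Gi m)" by (rule cm_inv[OF G0 gd_Gi[OF g mN]])
    have Gq: "\<And>q. q \<le> s \<Longrightarrow> cm X Y (G m q)"
      using Gs IHs by (metis le_neq_implies_less)
    have E: "\<forall>b\<in>{m..M}. cm X Y (Ec m b s)"
    proof
      fix b assume b: "b \<in> {m..M}"
      show "cm X Y (Ec m b s)"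
      proof (cases "b = m")
        case True then show ?thesis by (simp add: Ed_gd[OF g] cm_if cm_1)
      next
        case False
        have bN: "b \<in> {1..N}" "m \<le> b" using b mM M by auto
        have e: "Ec m b s = Gi m * (T m b s - (\<Sum>k\<in>{1..<m}. conv3 (Fc m k) (G k) (Ec k b) s)
                  - (\<Sum>q\<in>{1..s}. G m q * Ec m b (s - q)))"
          by (rule solve_left[OF gd_H1[OF g mN bN] gd_Gi(2)[OF g mN]])
        have r: "cm X Y (\<Sum>q\<in>{1..s}. G m q * Ec m b (s - q))"
        proof (rule cm_sum)
          fix q assume q: "q \<in> {1..s}"
          then have "s - q < s" by auto
          then show "cm X Y (G m q * Ec m b (s - q))"
            using Gq[of q] IHs[of "s - q"] q b by (auto intro: cm_mult)
        qed simp
        have bM: "b \<in> {1..M}" using b mM by auto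
        show ?thesis unfolding e
          by (intro cm_mult Gi cm_diff hT[OF mM bM] lowsumE b r)
      qed
    qed
    have F: "\<forall>a\<in>{m..M}. cm X Y (Fc a m s)"
    proof
      fix a assume a: "a \<in> {m..M}"
      show "cm X Y (Fc a m s)"
      proof (cases "a = m")
        case True then show ?thesis by (simp add: Fd_gd[OF g] cm_if cm_1)
      next
        case False
        have aN: "a \<in> {1..N}" "m \<le> a" using a mM M by auto
        have e: "Fc a m s = (T a m s - (\<Sum>k\<in>{1..<m}. conv3 (Fc a k) (G k) (Ec k m) s)
                  - (\<Sum>p<s. Fc a m p * G m (s - p))) * Gi m"
          by (rule solve_right[OF gd_H2[OF g mN aN] gd_Gi(1)[OF g mN]])
        have r: "cm X Y (\<Sum>p<s. Fc a m p * G m (s - p))"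
        proof (rule cm_sum)
          fix p assume p: "p \<in> {..<s}"
          then show "cm X Y (Fc a m p * G m (s - p))"
            using Gq[of "s - p"] IHs[of p] a by (auto intro: cm_mult)
        qed simp
        have aM: "a \<in> {1..M}" using a mM by auto
        show ?thesis unfolding e
          by (intro cm_mult Gi cm_diff hT[OF aM mM] lowsumF a r)
      qed
    qed
    show ?case using Gs E F by blast
  qed
qed


lemma QE_0: "QE \<iota> X Y 0 0" unfolding QE_def by simp

lemma QE_add: "QE \<iota> X Y a1 a2 \<Longrightarrow> QE \<iota> X Y b1 b2 \<Longrightarrow> QE \<iota> X Y (a1 + b1) (a2 + b2)"
  unfolding QE_def
  apply (elim conjE)
  apply (intro conjI)
  apply (simp only: distrib_left distrib_right)
  apply (simp only: distrib_left distrib_right)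
  apply (simp only: distrib_left distrib_right add_ac)
  done

lemma QE_diff: "QE \<iota> X Y a1 a2 \<Longrightarrow> QE \<iota> X Y b1 b2 \<Longrightarrow> QE \<iota> X Y (a1 - b1) (a2 - b2)"
  unfolding QE_def
  apply (elim conjE)
  apply (intro conjI)
  apply (simp only: left_diff_distrib right_diff_distrib)
  apply (simp only: left_diff_distrib right_diff_distrib)
  apply (simp only: left_diff_distrib right_diff_distrib)
  apply (simp only: diff_conv_add_uminus minus_add add_ac)
  done

lemma QE_lmult:
  assumes cv: "cv_algebra \<iota>" and x: "cm X Y x" and q: "QE \<iota> X Y a1 a2"
  shows "QE \<iota> X Y (x * a1) (x * a2)"
proof -
  have xX: "X * x = x * X" and xY: "Y * x = x * Y" using x unfolding cm_def by auto
  have q1: "Y * a1 = \<iota> vv * a1 * Y" and q2: "Y * a2 = a2 * Y"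
    and q3: "X * a1 = a1 * X + \<iota> (vv - inverse vv) * a2 * Y" using q unfolding QE_def by auto
  have "Y * (x * a1) = x * (Y * a1)" by (simp add: xY mult.assoc[symmetric])
  also have "\<dots> = x * (a1 * Y * \<iota> vv)" by (simp only: q1 cvC3[OF cv])
  also have "\<dots> = \<iota> vv * (x * a1) * Y" by (simp only: mult.assoc cvC[OF cv])
  finally have r1: "Y * (x * a1) = \<iota> vv * (x * a1) * Y" .
  have "Y * (x * a2) = x * (Y * a2)" by (simp add: xY mult.assoc[symmetric])
  also have "\<dots> = x * a2 * Y" by (simp only: q2 mult.assoc)
  finally have r2: "Y * (x * a2) = x * a2 * Y" .
  have "X * (x * a1) = x * (X * a1)" by (simp add: xX mult.assoc[symmetric])
  also have "\<dots> = x * (a1 * X + a2 * Y * \<iota> (vv - inverse vv))" by (simp only: q3 cvC3[OF cv])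
  also have "\<dots> = x * a1 * X + \<iota> (vv - inverse vv) * (x * a2) * Y"
    by (simp only: distrib_left mult.assoc cvC[OF cv])
  finally have r3: "X * (x * a1) = x * a1 * X + \<iota> (vv - inverse vv) * (x * a2) * Y" .
  show ?thesis unfolding QE_def using r1 r2 r3 by blast
qed

lemma QE_sum: "finite A \<Longrightarrow> (\<And>x. x \<in> A \<Longrightarrow> QE \<iota> X Y (f x) (g x)) \<Longrightarrow> QE \<iota> X Y (sum f A) (sum g A)"
  by (induction A rule: finite_induct) (auto intro: QE_0 QE_add)

lemma QF_0: "QF \<iota> X Y 0 0" unfolding QF_def by simp

lemma QF_add: "QF \<iota> X Y a1 a2 \<Longrightarrow> QF \<iota> X Y b1 b2 \<Longrightarrow> QF \<iota> X Y (a1 + b1) (a2 + b2)"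
  unfolding QF_def
  apply (elim conjE)
  apply (intro conjI)
  apply (simp only: distrib_left distrib_right)
  apply (simp only: distrib_left distrib_right)
  apply (simp only: distrib_left distrib_right diff_conv_add_uminus minus_add add_ac)
  done

lemma QF_diff: "QF \<iota> X Y a1 a2 \<Longrightarrow> QF \<iota> X Y b1 b2 \<Longrightarrow> QF \<iota> X Y (a1 - b1) (a2 - b2)"
  unfolding QF_def
  apply (elim conjE)
  apply (intro conjI)
  apply (simp only: left_diff_distrib right_diff_distrib)
  apply (simp only: left_diff_distrib right_diff_distrib)
  apply (simp only: left_diff_distrib right_diff_distrib)
  apply (simp only: diff_conv_add_uminus minus_add minus_minus add_ac)
  done

lemma QF_rmult:
  assumes cv: "cv_algebra \<iota>" and x: "cm X Y x" and q: "QF \<iota> X Y a1 a2"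
  shows "QF \<iota> X Y (a1 * x) (a2 * x)"
proof -
  have xX: "x * X = X * x" and xY: "x * Y = Y * x" using x unfolding cm_def by auto
  have q1: "Y * a1 = \<iota> vv * a1 * Y" and q2: "Y * a2 = a2 * Y"
    and q3: "a1 * X = X * a1 - \<iota> (vv - inverse vv) * Y * a2" using q unfolding QF_def by auto
  have "Y * (a1 * x) = (Y * a1) * x" by (simp add: mult.assoc)
  also have "\<dots> = \<iota> vv * (a1 * x) * Y" by (simp only: q1 mult.assoc xY)
  finally have r1: "Y * (a1 * x) = \<iota> vv * (a1 * x) * Y" .
  have "Y * (a2 * x) = (Y * a2) * x" by (simp add: mult.assoc)
  also have "\<dots> = a2 * x * Y" by (simp only: q2 mult.assoc xY)
  finally have r2: "Y * (a2 * x) = a2 * x * Y" .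
  have "a1 * x * X = (a1 * X) * x" by (simp add: mult.assoc xX)
  also have "\<dots> = X * (a1 * x) - \<iota> (vv - inverse vv) * Y * (a2 * x)"
    by (simp add: q3 left_diff_distrib mult.assoc)
  finally have r3: "a1 * x * X = X * (a1 * x) - \<iota> (vv - inverse vv) * Y * (a2 * x)" .
  show ?thesis unfolding QF_def using r1 r2 r3 by blast
qed

lemma QF_sum: "finite A \<Longrightarrow> (\<And>x. x \<in> A \<Longrightarrow> QF \<iota> X Y (f x) (g x)) \<Longrightarrow> QF \<iota> X Y (sum f A) (sum g A)"
  by (induction A rule: finite_induct) (auto intro: QF_0 QF_add)

lemma QE_conv3:
  assumes cv: "cv_algebra \<iota>" and "\<And>p. cm X Y (F p)" "\<And>q. cm X Y (Gm q)" "\<And>u. QE \<iota> X Y (E1 u) (E2 u)"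
  shows "QE \<iota> X Y (conv3 F Gm E1 s) (conv3 F Gm E2 s)"
  unfolding conv3_def by (intro QE_sum finite_atMost QE_lmult[OF cv] cm_mult assms)

lemma QF_conv3:
  assumes cv: "cv_algebra \<iota>" and "\<And>p. QF \<iota> X Y (F1 p) (F2 p)" "\<And>q. cm X Y (Gm q)" "\<And>u. cm X Y (E u)"
  shows "QF \<iota> X Y (conv3 F1 Gm E s) (conv3 F2 Gm E s)"
  unfolding conv3_def mult.assoc by (intro QF_sum finite_atMost QF_rmult[OF cv] cm_mult assms)




lemma gd_QE:
  assumes cv: "cv_algebra \<iota>" and g: "gd N T Fc G Ec Gi" and M: "M \<le> N"
    and memb: "\<And>m s. m \<in> {1..M} \<Longrightarrow> cm X Y (G m s) \<and> (\<forall>b\<in>{m..M}. cm X Y (Ec m b s)) \<and> (\<forall>a\<in>{m..M}. cm X Y (Fc a m s))"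
    and b: "b1 \<in> {M<..N}" "b2 \<in> {M<..N}"
    and hQ: "\<And>a s. a \<in> {1..M} \<Longrightarrow> QE \<iota> X Y (T a b1 s) (T a b2 s)"
  shows "m \<in> {1..M} \<Longrightarrow> QE \<iota> X Y (Ec m b1 s) (Ec m b2 s)"
proof (induction m arbitrary: s rule: less_induct)
  case (less m)
  note IHm = less.IH
  have mM: "m \<in> {1..M}" using less.prems .
  have mN: "m \<in> {1..N}" using mM M by auto
  have bN: "b1 \<in> {1..N}" "m \<le> b1" "b2 \<in> {1..N}" "m \<le> b2" using b mM by auto
  have Gi: "cm X Y (Gi m)"
    by (rule cm_inv[OF _ gd_Gi[OF g mN]]) (use memb[OF mM] in blast)
  have low: "QE \<iota> X Y (\<Sum>k\<in>{1..<m}. conv3 (Fc m k) (G k) (Ec k b1) s')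
                      (\<Sum>k\<in>{1..<m}. conv3 (Fc m k) (G k) (Ec k b2) s')" for s'
  proof (rule QE_sum)
    fix k assume k: "k \<in> {1..<m}"
    then have kM: "k \<in> {1..M}" using mM by auto
    show "QE \<iota> X Y (conv3 (Fc m k) (G k) (Ec k b1) s') (conv3 (Fc m k) (G k) (Ec k b2) s')"
      by (rule QE_conv3[OF cv]) (use memb[OF kM] k mM IHm[of k] kM in auto)
  qed simp
  show ?case
  proof (induction s rule: less_induct)
    case (less s)
    note IHs = less.IH
    have e1: "Ec m b1 s = Gi m * (T m b1 s - (\<Sum>k\<in>{1..<m}. conv3 (Fc m k) (G k) (Ec k b1) s)
                  - (\<Sum>q\<in>{1..s}. G m q * Ec m b1 (s - q)))"
      by (rule solve_left[OF gd_H1[OF g mN bN(1,2)] gd_Gi(2)[OF g mN]])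
    have e2: "Ec m b2 s = Gi m * (T m b2 s - (\<Sum>k\<in>{1..<m}. conv3 (Fc m k) (G k) (Ec k b2) s)
                  - (\<Sum>q\<in>{1..s}. G m q * Ec m b2 (s - q)))"
      by (rule solve_left[OF gd_H1[OF g mN bN(3,4)] gd_Gi(2)[OF g mN]])
    have r: "QE \<iota> X Y (\<Sum>q\<in>{1..s}. G m q * Ec m b1 (s - q)) (\<Sum>q\<in>{1..s}. G m q * Ec m b2 (s - q))"
    proof (rule QE_sum)
      fix q assume q: "q \<in> {1..s}"
      then have "s - q < s" by auto
      then show "QE \<iota> X Y (G m q * Ec m b1 (s - q)) (G m q * Ec m b2 (s - q))"
        by (intro QE_lmult[OF cv] IHs) (use memb[OF mM] in blast)
    qed simp
    show ?case unfolding e1 e2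
      by (intro QE_lmult[OF cv Gi] QE_diff hQ[OF mM] low r)
  qed
qed

lemma gd_QF:
  assumes cv: "cv_algebra \<iota>" and g: "gd N T Fc G Ec Gi" and M: "M \<le> N"
    and memb: "\<And>m s. m \<in> {1..M} \<Longrightarrow> cm X Y (G m s) \<and> (\<forall>b\<in>{m..M}. cm X Y (Ec m b s)) \<and> (\<forall>a\<in>{m..M}. cm X Y (Fc a m s))"
    and a: "a1 \<in> {M<..N}" "a2 \<in> {M<..N}"
    and hQ: "\<And>b s. b \<in> {1..M} \<Longrightarrow> QF \<iota> X Y (T a1 b s) (T a2 b s)"
  shows "m \<in> {1..M} \<Longrightarrow> QF \<iota> X Y (Fc a1 m s) (Fc a2 m s)"
proof (induction m arbitrary: s rule: less_induct)
  case (less m)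
  note IHm = less.IH
  have mM: "m \<in> {1..M}" using less.prems .
  have mN: "m \<in> {1..N}" using mM M by auto
  have aN: "a1 \<in> {1..N}" "m \<le> a1" "a2 \<in> {1..N}" "m \<le> a2" using a mM by auto
  have Gi: "cm X Y (Gi m)"
    by (rule cm_inv[OF _ gd_Gi[OF g mN]]) (use memb[OF mM] in blast)
  have low: "QF \<iota> X Y (\<Sum>k\<in>{1..<m}. conv3 (Fc a1 k) (G k) (Ec k m) s')
                      (\<Sum>k\<in>{1..<m}. conv3 (Fc a2 k) (G k) (Ec k m) s')" for s'
  proof (rule QF_sum)
    fix k assume k: "k \<in> {1..<m}"
    then have kM: "k \<in> {1..M}" using mM by auto
    show "QF \<iota> X Y (conv3 (Fc a1 k) (G k) (Ec k m) s') (conv3 (Fc a2 k) (G k) (Ec k m) s')"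
      by (rule QF_conv3[OF cv]) (use memb[OF kM] k mM IHm[of k] kM in auto)
  qed simp
  show ?case
  proof (induction s rule: less_induct)
    case (less s)
    note IHs = less.IH
    have e1: "Fc a1 m s = (T a1 m s - (\<Sum>k\<in>{1..<m}. conv3 (Fc a1 k) (G k) (Ec k m) s)
                  - (\<Sum>p<s. Fc a1 m p * G m (s - p))) * Gi m"
      by (rule solve_right[OF gd_H2[OF g mN aN(1,2)] gd_Gi(1)[OF g mN]])
    have e2: "Fc a2 m s = (T a2 m s - (\<Sum>k\<in>{1..<m}. conv3 (Fc a2 k) (G k) (Ec k m) s)
                  - (\<Sum>p<s. Fc a2 m p * G m (s - p))) * Gi m"
      by (rule solve_right[OF gd_H2[OF g mN aN(3,4)] gd_Gi(1)[OF g mN]])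
    have r: "QF \<iota> X Y (\<Sum>p<s. Fc a1 m p * G m (s - p)) (\<Sum>p<s. Fc a2 m p * G m (s - p))"
    proof (rule QF_sum)
      fix p assume p: "p \<in> {..<s}"
      then show "QF \<iota> X Y (Fc a1 m p * G m (s - p)) (Fc a2 m p * G m (s - p))"
        by (intro QF_rmult[OF cv] IHs) (use memb[OF mM] in auto)
    qed simp
    show ?case unfolding e1 e2
      by (intro QF_rmult[OF cv Gi] QF_diff hQ[OF mM] low r)
  qed
qed




lemma conv3_0: "conv3 F Gm E 0 = F 0 * Gm 0 * E 0"
  unfolding conv3_def by simp

lemma gauss_D:
  assumes "gauss_decomp n tp tm etil ftil gp gm" "a \<in> {1..n}" "b \<in> {1..n}"
  shows "tp a b s = (\<Sum>k\<in>{1..min a b}. conv3 (Fpc ftil a k) (gp k) (Epc etil k b) s)"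
    "tm a b s = (\<Sum>k\<in>{1..min a b}. conv3 (Fmc ftil a k) (gm k) (Emc etil k b) s)"
  using assms unfolding gauss_decomp_def by blast+

lemma gp0:
  assumes g: "gauss_decomp n tp tm etil ftil gp gm" and k: "k \<in> {1..n}"
  shows "gp k 0 = tp k k 0" "gm k 0 = tm k k 0"
proof -
  have "tp k k 0 = (\<Sum>k'\<in>{1..k}. Fpc ftil k k' 0 * gp k' 0 * Epc etil k' k 0)"
    using gauss_D(1)[OF g k k, of 0] by (simp add: conv3_0)
  also have "\<dots> = (\<Sum>k'\<in>{1..k}. if k' = k then gp k 0 else 0)"
    by (intro sum.cong refl) (auto simp: Fpc_def Epc_def)
  also have "\<dots> = gp k 0" using k by simp
  finally show "gp k 0 = tp k k 0" by simp
  have "tm k k 0 = (\<Sum>k'\<in>{1..k}. Fmc ftil k k' 0 * gm k' 0 * Emc etil k' k 0)"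
    using gauss_D(2)[OF g k k, of 0] by (simp add: conv3_0)
  also have "\<dots> = (\<Sum>k'\<in>{1..k}. if k' = k then gm k 0 else 0)"
    by (intro sum.cong refl) (auto simp: Fmc_def Emc_def)
  also have "\<dots> = gm k 0" using k by simp
  finally show "gm k 0 = tm k k 0" by simp
qed

lemma gd_plus:
  assumes m: "rtt_model \<iota> n tp tm" and g: "gauss_decomp n tp tm etil ftil gp gm"
  shows "gd n tp (Fpc ftil) gp (Epc etil) (\<lambda>k. tm k k 0)"
  unfolding gd_def
proof (intro conjI ballI allI)
  fix a b s assume "a \<in> {1..n}" "b \<in> {1..n}"
  then show "tp a b s = (\<Sum>k\<in>{1..min a b}. conv3 (Fpc ftil a k) (gp k) (Epc etil k b) s)"
    using gauss_D(1)[OF g] by blast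
next
  fix a p show "Fpc ftil a a p = (if p = 0 then 1 else 0)" by (simp add: Fpc_def)
next
  fix k u show "Epc etil k k u = (if u = 0 then 1 else 0)" by (simp add: Epc_def)
next
  fix k assume k: "k \<in> {1..n}"
  show "gp k 0 * tm k k 0 = 1" "tm k k 0 * gp k 0 = 1"
    using gp0(1)[OF g k] rtt_model_D(6,7)[OF m k] by simp_all
qed

lemma gd_minus:
  assumes m: "rtt_model \<iota> n tp tm" and g: "gauss_decomp n tp tm etil ftil gp gm"
  shows "gd n tm (Fmc ftil) gm (Emc etil) (\<lambda>k. tp k k 0)"
  unfolding gd_def
proof (intro conjI ballI allI)
  fix a b s assume "a \<in> {1..n}" "b \<in> {1..n}"
  then show "tm a b s = (\<Sum>k\<in>{1..min a b}. conv3 (Fmc ftil a k) (gm k) (Emc etil k b) s)"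
    using gauss_D(2)[OF g] by blast
next
  fix a p show "Fmc ftil a a p = (if p = 0 then 1 else 0)" by (simp add: Fmc_def)
next
  fix k u show "Emc etil k k u = (if u = 0 then 1 else 0)" by (simp add: Emc_def)
next
  fix k assume k: "k \<in> {1..n}"
  show "gm k 0 * tp k k 0 = 1" "tp k k 0 * gm k 0 = 1"
    using gp0(2)[OF g k] rtt_model_D(6,7)[OF m k] by simp_all
qed

lemma X_E:
  assumes m: "rtt_model \<iota> n tp tm" and g: "gauss_decomp n tp tm etil ftil gp gm"
    and i: "1 \<le> i" "i < n"
  shows "tp i (i+1) 0 = tp i i 0 * etil i (i+1) 0"
proof -
  have i1: "i \<in> {1..n}" "i+1 \<in> {1..n}" "i \<le> i+1" using i by auto
  have "tp i (i+1) 0 = (\<Sum>k\<in>{1..<i}. conv3 (Fpc ftil i k) (gp k) (Epc etil k (i+1)) 0) + gp i 0 * Epc etil i (i+1) 0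
     + (\<Sum>q\<in>{1..0}. gp i q * Epc etil i (i+1) (0 - q))"
    by (rule gd_H1[OF gd_plus[OF m g] i1])
  also have "\<dots> = gp i 0 * Epc etil i (i+1) 0"
    by (simp add: conv3_0 Fpc_def)
  finally show ?thesis using gp0(1)[OF g i1(1)] by (simp add: Epc_def)
qed

lemma X_F:
  assumes m: "rtt_model \<iota> n tp tm" and g: "gauss_decomp n tp tm etil ftil gp gm"
    and i: "1 \<le> i" "i < n"
  shows "tm (i+1) i 0 = ftil (i+1) i 0 * tm i i 0"
proof -
  have i1: "i \<in> {1..n}" "i+1 \<in> {1..n}" "i \<le> i+1" using i by auto
  have "tm (i+1) i 0 = (\<Sum>k\<in>{1..<i}. conv3 (Fmc ftil (i+1) k) (gm k) (Emc etil k i) 0) + Fmc ftil (i+1) i 0 * gm i 0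
     + (\<Sum>p<0. Fmc ftil (i+1) i p * gm i (0 - p))"
    by (rule gd_H2[OF gd_minus[OF m g] i1])
  also have "\<dots> = Fmc ftil (i+1) i 0 * gm i 0"
    by (simp add: conv3_0 Emc_def)
  finally show ?thesis using gp0(2)[OF g i1(1)] by (simp add: Fmc_def)
qed

lemma bracketE_alg:
  assumes cv: "cv_algebra \<iota>" and Y: "Y * Yi = 1" "Yi * Y = 1" and q: "QE \<iota> X Y e1 e2" and Z: "X = Y * Z"
  shows "Z * e1 - \<iota> (inverse vv) * e1 * Z = \<iota> (vv - inverse vv) * e2"
proof -
  have q1: "Y * e1 = \<iota> vv * e1 * Y" and q2: "Y * e2 = e2 * Y"
    and q3: "X * e1 = e1 * X + \<iota> (vv - inverse vv) * e2 * Y" using q unfolding QE_def by auto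
  have Zd: "Z = Yi * X" using Z Y by (simp add: mult.assoc[symmetric])
  have "e1 * Yi = Yi * (Y * e1) * Yi" using Y by (simp add: mult.assoc[symmetric])
  also have "\<dots> = Yi * (\<iota> vv * e1 * Y) * Yi" by (simp only: q1)
  also have "\<dots> = \<iota> vv * (Yi * e1 * (Y * Yi))" by (simp only: mult.assoc cvC[OF cv])
  also have "\<dots> = \<iota> vv * (Yi * e1)" using Y by simp
  finally have a: "e1 * Yi = \<iota> vv * (Yi * e1)" .
  have b: "Yi * e1 = \<iota> (inverse vv) * (e1 * Yi)"
    using a iota_vv_inv[OF cv] by (simp add: mult.assoc[symmetric])
  have c: "Yi * (e2 * Y) = e2"
  proof -
    have "Yi * (e2 * Y) = Yi * (Y * e2)" by (simp add: q2)
    also have "\<dots> = e2" using Y by (simp add: mult.assoc[symmetric])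
    finally show ?thesis .
  qed
  have "Z * e1 = Yi * (e1 * X) + \<iota> (vv - inverse vv) * (Yi * (e2 * Y))"
    by (simp add: Zd mult.assoc q3[unfolded mult.assoc] distrib_left cvC[OF cv])
  also have "\<dots> = Yi * (e1 * X) + \<iota> (vv - inverse vv) * e2" by (simp only: c)
  also have "Yi * (e1 * X) = (Yi * e1) * X" by (simp only: mult.assoc)
  also have "\<dots> = \<iota> (inverse vv) * e1 * (Yi * X)" by (simp only: b mult.assoc)
  also have "\<dots> = \<iota> (inverse vv) * e1 * Z" by (simp only: Zd)
  finally show ?thesis by simp
qed


lemma bracketF_alg:
  assumes cv: "cv_algebra \<iota>" and Y: "Y * Yi = 1" "Yi * Y = 1" and q: "QF \<iota> X Y f1 f2" and W: "X = W * Y"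
  shows "f1 * W - \<iota> vv * W * f1 = \<iota> (inverse vv - vv) * f2"
proof -
  have q1: "Y * f1 = \<iota> vv * f1 * Y" and q2: "Y * f2 = f2 * Y"
    and q3: "f1 * X = X * f1 - \<iota> (vv - inverse vv) * Y * f2" using q unfolding QF_def by auto
  have Wd: "W = X * Yi" using W Y by (simp add: mult.assoc)
  have "f1 * Yi = Yi * (Y * f1) * Yi" using Y by (simp add: mult.assoc[symmetric])
  also have "\<dots> = Yi * (\<iota> vv * f1 * Y) * Yi" by (simp only: q1)
  also have "\<dots> = \<iota> vv * (Yi * f1 * (Y * Yi))" by (simp only: mult.assoc cvC[OF cv])
  also have "\<dots> = \<iota> vv * (Yi * f1)" using Y by simp
  finally have a: "f1 * Yi = \<iota> vv * (Yi * f1)" .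
  have c: "Y * f2 * Yi = f2"
  proof -
    have "Y * f2 * Yi = f2 * (Y * Yi)" by (simp only: q2 mult.assoc)
    then show ?thesis using Y by simp
  qed
  have "f1 * W = (f1 * X) * Yi" by (simp only: Wd mult.assoc)
  also have "\<dots> = X * (f1 * Yi) - \<iota> (vv - inverse vv) * (Y * f2 * Yi)"
    by (simp only: q3 left_diff_distrib mult.assoc)
  also have "\<dots> = X * (\<iota> vv * (Yi * f1)) - \<iota> (vv - inverse vv) * f2" by (simp only: a c)
  also have "X * (\<iota> vv * (Yi * f1)) = \<iota> vv * W * f1" by (simp only: Wd mult.assoc cvC[OF cv])
  finally have "f1 * W = \<iota> vv * W * f1 - \<iota> (vv - inverse vv) * f2" .
  moreover have "\<iota> (inverse vv - vv) = - \<iota> (vv - inverse vv)"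
    using cvA(5)[OF cv, of "vv - inverse vv"] by simp
  ultimately show ?thesis by simp
qed

lemma bracketE:
  assumes cv: "cv_algebra \<iota>" and m: "rtt_model \<iota> n tp tm" and g: "gauss_decomp n tp tm etil ftil gp gm"
    and j: "1 \<le> j" "j < i" and i: "i < n"
  shows "etil i (i+1) 0 * etil j i r - \<iota> (inverse vv) * etil j i r * etil i (i+1) 0
       = \<iota> (vv - inverse vv) * etil j (i+1) r"
proof -
  have i1: "1 \<le> i" using j by simp
  have M: "i - 1 \<le> n" using i by simp
  have iN: "i \<in> {1..n}" using i1 i by simp
  have ran: "\<And>a. a \<in> {1..i-1} \<Longrightarrow> a \<in> {1..<i}" by auto
  have jM: "j \<in> {1..i-1}" using j by auto
  have bb: "i \<in> {i-1<..n}" "i+1 \<in> {i-1<..n}" using i i1 by auto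
  have q: "QE \<iota> (tp i (i+1) 0) (tp i i 0) (etil j i r) (etil j (i+1) r)"
  proof (cases "0 \<le> r")
    case True
    define s where "s = nat r"
    have rs: "r = int s" using True s_def by simp
    note gdp = gd_plus[OF m g]
    have memb: "\<And>m s. m \<in> {1..i-1} \<Longrightarrow> cm (tp i (i+1) 0) (tp i i 0) (gp m s) \<and> (\<forall>b\<in>{m..i-1}. cm (tp i (i+1) 0) (tp i i 0) (Epc etil m b s)) \<and> (\<forall>a\<in>{m..i-1}. cm (tp i (i+1) 0) (tp i i 0) (Fpc ftil a m s))"
      by (rule gd_cm[OF gdp M]) (use E_plus_rel(2)[OF cv m i1 i] ran in blast)
    have "QE \<iota> (tp i (i+1) 0) (tp i i 0) (Epc etil j i s) (Epc etil j (i+1) s)"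
      by (rule gd_QE[OF cv gdp M memb bb]) (use E_plus_rel(1)[OF cv m i1 i] ran jM in blast)+
    then show ?thesis using j by (simp add: Epc_def rs)
  next
    case False
    define s where "s = nat (- r)"
    have rs: "r = - int s" "0 < s" using False s_def by simp_all
    note gdm = gd_minus[OF m g]
    have memb: "\<And>m s. m \<in> {1..i-1} \<Longrightarrow> cm (tp i (i+1) 0) (tp i i 0) (gm m s) \<and> (\<forall>b\<in>{m..i-1}. cm (tp i (i+1) 0) (tp i i 0) (Emc etil m b s)) \<and> (\<forall>a\<in>{m..i-1}. cm (tp i (i+1) 0) (tp i i 0) (Fmc ftil a m s))"
      by (rule gd_cm[OF gdm M]) (use E_minus_rel(2)[OF cv m i1 i] ran in blast)
    have "QE \<iota> (tp i (i+1) 0) (tp i i 0) (Emc etil j i s) (Emc etil j (i+1) s)"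
      by (rule gd_QE[OF cv gdm M memb bb]) (use E_minus_rel(1)[OF cv m i1 i] ran jM in blast)+
    then show ?thesis using j rs by (simp add: Emc_def)
  qed
  show ?thesis
    by (rule bracketE_alg[OF cv rtt_model_D(6,7)[OF m iN] q X_E[OF m g i1 i]])
qed

lemma bracketF:
  assumes cv: "cv_algebra \<iota>" and m: "rtt_model \<iota> n tp tm" and g: "gauss_decomp n tp tm etil ftil gp gm"
    and j: "1 \<le> j" "j < i" and i: "i < n"
  shows "ftil i j r * ftil (i+1) i 0 - \<iota> vv * ftil (i+1) i 0 * ftil i j r
       = \<iota> (inverse vv - vv) * ftil (i+1) j r"
proof -
  have i1: "1 \<le> i" using j by simp
  have M: "i - 1 \<le> n" using i by simp
  have iN: "i \<in> {1..n}" using i1 i by simp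
  have ran: "\<And>a. a \<in> {1..i-1} \<Longrightarrow> a \<in> {1..<i}" by auto
  have jM: "j \<in> {1..i-1}" using j by auto
  have aa: "i \<in> {i-1<..n}" "i+1 \<in> {i-1<..n}" using i i1 by auto
  have q: "QF \<iota> (tm (i+1) i 0) (tm i i 0) (ftil i j r) (ftil (i+1) j r)"
  proof (cases "0 < r")
    case True
    define s where "s = nat r"
    have rs: "r = int s" "0 < s" using True s_def by simp_all
    note gdp = gd_plus[OF m g]
    have Rp: "\<And>s a b c d. a \<in> {1..n} \<Longrightarrow> b \<in> {1..n} \<Longrightarrow> c \<in> {1..n} \<Longrightarrow> d \<in> {1..n} \<Longrightarrow>
      \<iota> (if a = c then - inverse vv else - 1) * tm a b 0 * tp c d s
      + (if c < a then \<iota> (vv - inverse vv) * tm c b 0 * tp a d s else 0)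
    = tp c d s * tm a b 0 * \<iota> (if b = d then - inverse vv else - 1)
      + (if b < d then tp c b s * tm a d 0 * \<iota> (vv - inverse vv) else 0)"
      using R34[OF cv rtt_model_D(3)[OF m], where q = "- int s" for s] by (simp only: Lp_vals(3))
    have memb: "\<And>m s. m \<in> {1..i-1} \<Longrightarrow> cm (tm (i+1) i 0) (tm i i 0) (gp m s) \<and> (\<forall>b\<in>{m..i-1}. cm (tm (i+1) i 0) (tm i i 0) (Epc etil m b s)) \<and> (\<forall>a\<in>{m..i-1}. cm (tm (i+1) i 0) (tm i i 0) (Fpc ftil a m s))"
      by (rule gd_cm[OF gdp M]) (use F_rel_gen(2)[OF cv m i1 i Rp] ran in blast)
    have "QF \<iota> (tm (i+1) i 0) (tm i i 0) (Fpc ftil i j s) (Fpc ftil (i+1) j s)"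
      by (rule gd_QF[OF cv gdp M memb aa]) (use F_rel_gen(1)[OF cv m i1 i Rp] ran jM in blast)+
    then show ?thesis using j rs by (simp add: Fpc_def)
  next
    case False
    define s where "s = nat (- r)"
    have rs: "r = - int s" using False s_def by simp_all
    note gdm = gd_minus[OF m g]
    have Rm: "\<And>s a b c d. a \<in> {1..n} \<Longrightarrow> b \<in> {1..n} \<Longrightarrow> c \<in> {1..n} \<Longrightarrow> d \<in> {1..n} \<Longrightarrow>
      \<iota> (if a = c then - inverse vv else - 1) * tm a b 0 * tm c d s
      + (if c < a then \<iota> (vv - inverse vv) * tm c b 0 * tm a d s else 0)
    = tm c d s * tm a b 0 * \<iota> (if b = d then - inverse vv else - 1)
      + (if b < d then tm c b s * tm a d 0 * \<iota> (vv - inverse vv) else 0)"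
      using R34[OF cv rtt_model_D(2)[OF m], where q = "int s" for s] by (simp only: Lm_vals(3))
    have memb: "\<And>m s. m \<in> {1..i-1} \<Longrightarrow> cm (tm (i+1) i 0) (tm i i 0) (gm m s) \<and> (\<forall>b\<in>{m..i-1}. cm (tm (i+1) i 0) (tm i i 0) (Emc etil m b s)) \<and> (\<forall>a\<in>{m..i-1}. cm (tm (i+1) i 0) (tm i i 0) (Fmc ftil a m s))"
      by (rule gd_cm[OF gdm M]) (use F_rel_gen(2)[OF cv m i1 i Rm] ran in blast)
    have "QF \<iota> (tm (i+1) i 0) (tm i i 0) (Fmc ftil i j s) (Fmc ftil (i+1) j s)"
      by (rule gd_QF[OF cv gdm M memb aa]) (use F_rel_gen(1)[OF cv m i1 i Rm] ran jM in blast)+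
    then show ?thesis using j rs by (simp add: Fmc_def)
  qed
  show ?thesis
    by (rule bracketF_alg[OF cv rtt_model_D(7,6)[OF m iN] q X_F[OF m g i1 i]])
qed




lemma iso_D:
  assumes "alg_iso \<iota>A \<iota>B \<Phi>"
  shows "bij \<Phi>" "\<Phi> (x + y) = \<Phi> x + \<Phi> y" "\<Phi> (x * y) = \<Phi> x * \<Phi> y" "\<Phi> (\<iota>A c) = \<iota>B c"
  using assms unfolding alg_iso_def by blast+

lemma iso_diff:
  assumes "alg_iso \<iota>A \<iota>B \<Phi>"
  shows "\<Phi> (x - y) = \<Phi> x - \<Phi> y"
proof -
  have "\<Phi> (x - y) + \<Phi> y = \<Phi> x" using iso_D(2)[OF assms, of "x - y" y] by simp
  then show ?thesis by (simp add: eq_diff_eq)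
qed

lemma iso_qbr:
  assumes "alg_iso \<iota>A \<iota>B \<Phi>"
  shows "\<Phi> (qbr \<iota>A x a b) = \<Phi> a * \<Phi> b - \<iota>B x * \<Phi> b * \<Phi> a"
  unfolding qbr_def by (simp add: iso_diff[OF assms] iso_D(3,4)[OF assms])

lemma scal_step:
  assumes cv: "cv_algebra \<iota>"
  shows "(\<iota> d * Z) * (\<iota> c * e1) - \<iota> w * (\<iota> c * e1) * (\<iota> d * Z) = \<iota> (d * c) * (Z * e1 - \<iota> w * e1 * Z)"
proof -
  have 1: "(\<iota> d * Z) * (\<iota> c * e1) = \<iota> (d * c) * (Z * e1)"
  proof -
    have "(\<iota> d * Z) * (\<iota> c * e1) = \<iota> d * ((Z * \<iota> c) * e1)" by (simp only: mult.assoc)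
    also have "\<dots> = \<iota> d * ((\<iota> c * Z) * e1)" by (simp only: cvC[OF cv, of c Z])
    also have "\<dots> = (\<iota> d * \<iota> c) * (Z * e1)" by (simp only: mult.assoc)
    also have "\<dots> = \<iota> (d * c) * (Z * e1)" by (simp only: cvA(4)[OF cv])
    finally show ?thesis .
  qed
  have 2: "\<iota> w * (\<iota> c * e1) * (\<iota> d * Z) = \<iota> (w * c * d) * (e1 * Z)"
  proof -
    have "\<iota> w * (\<iota> c * e1) * (\<iota> d * Z) = \<iota> w * \<iota> c * ((e1 * \<iota> d) * Z)" by (simp only: mult.assoc)
    also have "\<dots> = \<iota> w * \<iota> c * ((\<iota> d * e1) * Z)" by (simp only: cvC[OF cv, of d e1])
    also have "\<dots> = (\<iota> w * \<iota> c * \<iota> d) * (e1 * Z)" by (simp only: mult.assoc)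
    also have "\<dots> = \<iota> (w * c * d) * (e1 * Z)" by (simp only: cvA(4)[OF cv])
    finally show ?thesis .
  qed
  have 3: "\<iota> (d * c) * (\<iota> w * e1 * Z) = \<iota> (w * c * d) * (e1 * Z)"
  proof -
    have "\<iota> (d * c) * (\<iota> w * e1 * Z) = (\<iota> (d * c) * \<iota> w) * (e1 * Z)" by (simp only: mult.assoc)
    also have "\<dots> = \<iota> (d * c * w) * (e1 * Z)" by (simp only: cvA(4)[OF cv])
    also have "d * c * w = w * c * d" by (simp only: mult_ac)
    finally show ?thesis .
  qed
  show ?thesis by (simp only: 1 2 3 right_diff_distrib)
qed

lemma ups_D:
  assumes "upsilon_gens \<iota>B n \<Phi> e f php phm etil ftil gp gm" "k \<in> {1..<n}"
  shows "\<Phi> (e k r) = \<iota>B ((if r < 0 then -1 else 1) * vv powi (- (int k * r)) / (vv - inverse vv)) * etil k (k + 1) r"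
    "\<Phi> (f k r) = \<iota>B ((if 0 < r then 1 else -1) * vv powi (- (int k * r)) / (vv - inverse vv)) * ftil (k + 1) k r"
  using assms unfolding upsilon_gens_def by blast+

lemma field_step: "(k::'f::field) \<noteq> 0 \<Longrightarrow> (1 / k * c) * k = c"
  by simp

lemma field_step2: "(k::'f::field) \<noteq> 0 \<Longrightarrow> (c * (- 1 / k)) * (- k) = c"
  by simp

lemma nestE_Phi:
  assumes cvB: "cv_algebra \<iota>B" and m: "rtt_model \<iota>B n tp tm" and g: "gauss_decomp n tp tm etil ftil gp gm"
    and iso: "alg_iso \<iota>A \<iota>B \<Phi>" and ups: "upsilon_gens \<iota>B n \<Phi> e f php phm etil ftil gp gm"
    and j: "1 \<le> j"
  shows "j + k < n \<Longrightarrow> \<Phi> (nestE \<iota>A e j r k)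
     = \<iota>B ((if r < 0 then -1 else 1) * vv powi (- (int j * r)) / (vv - inverse vv)) * etil j (j + k + 1) r"
proof (induction k)
  case 0
  then show ?case using ups_D(1)[OF ups, of j r] j by simp
next
  case (Suc k)
  define c where "c = (if r < 0 then -1 else 1) * vv powi (- (int j * r)) / (vv - inverse vv)"
  define i where "i = j + Suc k"
  have i: "j < i" "i < n" using Suc.prems i_def by auto
  have IH: "\<Phi> (nestE \<iota>A e j r k) = \<iota>B c * etil j i r" using Suc i_def c_def by simp
  have E0: "\<Phi> (e i 0) = \<iota>B (1 / (vv - inverse vv) * 1) * etil i (i + 1) 0"
    using ups_D(1)[OF ups, of i 0] i j by simp
  have "\<Phi> (nestE \<iota>A e j r (Suc k)) = \<Phi> (e i 0) * \<Phi> (nestE \<iota>A e j r k) - \<iota>B (inverse vv) * \<Phi> (nestE \<iota>A e j r k) * \<Phi> (e i 0)"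
    by (simp add: iso_qbr[OF iso] i_def)
  also have "\<dots> = \<iota>B (1 / (vv - inverse vv) * 1 * c) * (etil i (i + 1) 0 * etil j i r - \<iota>B (inverse vv) * etil j i r * etil i (i + 1) 0)"
    by (simp only: E0 IH scal_step[OF cvB])
  also have "\<dots> = \<iota>B (1 / (vv - inverse vv) * 1 * c) * (\<iota>B (vv - inverse vv) * etil j (i+1) r)"
    by (simp only: bracketE[OF cvB m g j i(1) i(2)])
  also have "\<dots> = \<iota>B c * etil j (i+1) r"
    by (simp only: mult.assoc[symmetric] cvA(4)[OF cvB, symmetric] field_step[OF vk_nz] mult_1_right)
  finally show ?case by (simp add: c_def i_def)
qed

lemma nestF_Phi:
  assumes cvB: "cv_algebra \<iota>B" and m: "rtt_model \<iota>B n tp tm" and g: "gauss_decomp n tp tm etil ftil gp gm"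
    and iso: "alg_iso \<iota>A \<iota>B \<Phi>" and ups: "upsilon_gens \<iota>B n \<Phi> e f php phm etil ftil gp gm"
    and j: "1 \<le> j"
  shows "j + k < n \<Longrightarrow> \<Phi> (nestF \<iota>A f j r k)
     = \<iota>B ((if 0 < r then 1 else -1) * vv powi (- (int j * r)) / (vv - inverse vv)) * ftil (j + k + 1) j r"
proof (induction k)
  case 0
  then show ?case using ups_D(2)[OF ups, of j r] j by simp
next
  case (Suc k)
  define c where "c = (if 0 < r then 1 else -1) * vv powi (- (int j * r)) / (vv - inverse vv)"
  define i where "i = j + Suc k"
  have i: "j < i" "i < n" using Suc.prems i_def by auto
  have IH: "\<Phi> (nestF \<iota>A f j r k) = \<iota>B c * ftil i j r" using Suc i_def c_def by simp
  have F0: "\<Phi> (f i 0) = \<iota>B (- 1 / (vv - inverse vv)) * ftil (i + 1) i 0"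
    using ups_D(2)[OF ups, of i 0] i j by simp
  have "\<Phi> (nestF \<iota>A f j r (Suc k)) = \<Phi> (nestF \<iota>A f j r k) * \<Phi> (f i 0) - \<iota>B vv * \<Phi> (f i 0) * \<Phi> (nestF \<iota>A f j r k)"
    by (simp add: iso_qbr[OF iso] i_def)
  also have "\<dots> = \<iota>B (c * (- 1 / (vv - inverse vv))) * (ftil i j r * ftil (i + 1) i 0 - \<iota>B vv * ftil (i + 1) i 0 * ftil i j r)"
    by (simp only: F0 IH scal_step[OF cvB])
  also have "\<dots> = \<iota>B (c * (- 1 / (vv - inverse vv))) * (\<iota>B (inverse vv - vv) * ftil (i+1) j r)"
    by (simp only: bracketF[OF cvB m g j i(1) i(2)])
  also have "inverse vv - vv = - (vv - inverse vv)" by simp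
  also have "\<iota>B (c * (- 1 / (vv - inverse vv))) * (\<iota>B (- (vv - inverse vv)) * ftil (i+1) j r) = \<iota>B c * ftil (i+1) j r"
    by (simp only: mult.assoc[symmetric] cvA(4)[OF cvB, symmetric] field_step2[OF vk_nz])
  finally show ?case by (simp add: c_def i_def)
qed




lemma field_step3: "(k::'f::field) \<noteq> 0 \<Longrightarrow> k * (x / k) = x"
  by simp

lemma field_step4: "(k::'f::field) \<noteq> 0 \<Longrightarrow> (- k) * ((if P then 1 else -1) * p / k) = (if P then -1 else 1) * p"
  by (cases P) simp_all

theorem corollary3p23:
  fixes n i j :: nat and r :: int
    and \<iota>A :: "cv \<Rightarrow> 'a::ring_1" and \<iota>B :: "cv \<Rightarrow> 'b::ring_1" and \<Phi> :: "'a \<Rightarrow> 'b"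
    and e f :: "nat \<Rightarrow> int \<Rightarrow> 'a" and php phm :: "nat \<Rightarrow> nat \<Rightarrow> 'a"
    and tp tm :: "nat \<Rightarrow> nat \<Rightarrow> nat \<Rightarrow> 'b"
    and etil ftil :: "nat \<Rightarrow> nat \<Rightarrow> int \<Rightarrow> 'b" and gp gm :: "nat \<Rightarrow> nat \<Rightarrow> 'b"
  assumes "cv_algebra \<iota>A" and "cv_algebra \<iota>B"
    and "rtt_model \<iota>B n tp tm"
    and "gauss_decomp n tp tm etil ftil gp gm"
    and "alg_iso \<iota>A \<iota>B \<Phi>"
    and "upsilon_gens \<iota>B n \<Phi> e f php phm etil ftil gp gm"
    and "1 \<le> j" and "j \<le> i" and "i < n"
  shows "Eroot \<iota>A e r j i
           = \<iota>A ((if r < 0 then -1 else 1) * vv powi (- (int j * r))) * inv \<Phi> (etil j (i + 1) r)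
         \<and> Froot \<iota>A f r j i
           = \<iota>A ((if 0 < r then -1 else 1) * vv powi (- (int j * r))) * inv \<Phi> (ftil (i + 1) j r)"
proof -
  note cvB = assms(2) and m = assms(3) and g = assms(4) and iso = assms(5) and ups = assms(6)
  have bij: "bij \<Phi>" by (rule iso_D(1)[OF iso])
  then have injP: "inj \<Phi>" by (rule bij_is_inj)
  have surjP: "\<And>y. \<Phi> (inv \<Phi> y) = y" using bij by (simp add: bij_is_surj surj_f_inv_f)
  have k: "j + (i - j) < n" "j + (i - j) + 1 = i + 1" using assms(8,9) by auto
  define sE where "sE = (if r < 0 then -1 else 1) * vv powi (- (int j * r))"
  define sf where "sf = (if 0 < r then 1 else -1) * vv powi (- (int j * r))"
  define sF where "sF = (if 0 < r then -1 else 1) * vv powi (- (int j * r))"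
  have E: "\<Phi> (Eroot \<iota>A e r j i) = \<Phi> (\<iota>A sE * inv \<Phi> (etil j (i + 1) r))"
  proof -
    have "\<Phi> (Eroot \<iota>A e r j i) = \<iota>B (vv - inverse vv) * (\<iota>B (sE / (vv - inverse vv)) * etil j (i + 1) r)"
      unfolding Eroot_def iso_D(3)[OF iso] iso_D(4)[OF iso]
      using nestE_Phi[OF cvB m g iso ups assms(7) k(1), of r] k(2) by (simp add: sE_def)
    also have "\<dots> = \<iota>B sE * etil j (i + 1) r"
      by (simp only: mult.assoc[symmetric] cvA(4)[OF cvB, symmetric] field_step3[OF vk_nz])
    also have "\<dots> = \<Phi> (\<iota>A sE * inv \<Phi> (etil j (i + 1) r))"
      by (simp only: iso_D(3)[OF iso] iso_D(4)[OF iso] surjP)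
    finally show ?thesis .
  qed
  have F: "\<Phi> (Froot \<iota>A f r j i) = \<Phi> (\<iota>A sF * inv \<Phi> (ftil (i + 1) j r))"
  proof -
    have "\<Phi> (Froot \<iota>A f r j i) = \<iota>B (inverse vv - vv) * (\<iota>B (sf / (vv - inverse vv)) * ftil (i + 1) j r)"
      unfolding Froot_def iso_D(3)[OF iso] iso_D(4)[OF iso]
      using nestF_Phi[OF cvB m g iso ups assms(7) k(1), of r] k(2) by (simp add: sf_def)
    also have "inverse vv - vv = - (vv - inverse vv)" by simp
    also have "\<iota>B (- (vv - inverse vv)) * (\<iota>B (sf / (vv - inverse vv)) * ftil (i + 1) j r) = \<iota>B sF * ftil (i + 1) j r"
      unfolding sf_def sF_def
      by (simp only: mult.assoc[symmetric] cvA(4)[OF cvB, symmetric] field_step4[OF vk_nz])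
    also have "\<dots> = \<Phi> (\<iota>A sF * inv \<Phi> (ftil (i + 1) j r))"
      by (simp only: iso_D(3)[OF iso] iso_D(4)[OF iso] surjP)
    finally show ?thesis .
  qed
  show ?thesis
    using injD[OF injP E] injD[OF injP F] by (simp add: sE_def sF_def)
qed


end
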